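(* Let $\Sigma,\hat{\Sigma} \in \mathbb{R}^{p \times p}$ be symmetric, with eigenvalues $\lambda_1 \geq \ldots \geq \lambda_p$ and $\hat{\lambda}_1 \geq \ldots \geq \hat{\lambda}_p$ respectively (listed with multiplicity). Fix $1 \leq r \leq s \leq p$ and assume that $\min(\lambda_{r-1} - \lambda_r,\lambda_s - \lambda_{s+1}) > 0$, where $\lambda_0 := \infty$ and $\lambda_{p+1} := -\infty$. Let $d := s - r + 1$, and let $V = (v_r,v_{r+1},\ldots,v_s) \in \mathbb{R}^{p \times d}$ and $\hat{V} = (\hat{v}_r,\hat{v}_{r+1},\ldots,\hat{v}_s) \in \mathbb{R}^{p \times d}$ have orthonormal columns satisfying $\Sigma v_j = \lambda_j v_j$ and $\hat{\Sigma}\hat{v}_j = \hat{\lambda}_j \hat{v}_j$ for $j= r,r+1,\ldots,s$. Then \[ \|\sin \Theta(\hat{V},V)\|_{\mathrm{F}} \leq \frac{2\min(d^{1/2}\|\hat{\Sigma} - \Sigma\|_{\mathrm{op}},\|\hat{\Sigma} - \Sigma\|_\mathrm{F})}{\min(\lambda_{r-1} - \lambda_r,\lambda_s - \lambda_{s+1})}. \] Moreover, there exists an orthogonal matrix $\hat{O} \in \mathbb{R}^{d \times d}$ such that \[ \|\hat{V}\hat{O} - V\|_{\mathrm{F}} \leq \frac{2^{3/2}\min(d^{1/2}\|\hat{\Sigma} - \Sigma\|_{\mathrm{op}},\|\hat{\Sigma} - \Sigma\|_\mathrm{F})}{\min(\lambda_{r-1} - \lambda_r,\lambda_s - \lambda_{s+1})}.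 \]
   Context: $\|\cdot\|_{\mathrm{F}}$ denotes the Frobenius norm and $\|\cdot\|_{\mathrm{op}}$ the operator (spectral) norm. For $V,\hat{V} \in \mathbb{R}^{p \times d}$ with orthonormal columns, let $\sigma_1 \geq \ldots \geq \sigma_d$ be the singular values of $\hat{V}^T V$; the principal angles between the column spaces are $\theta_j = \cos^{-1}\sigma_j$, $\Theta(\hat{V},V)$ is the $d \times d$ diagonal matrix with diagonal entries $\theta_1,\ldots,\theta_d$, and $\sin\Theta(\hat{V},V)$ is defined entrywise (so $\|\sin\Theta(\hat{V},V)\|_{\mathrm{F}}^2 = d - \|\hat{V}^TV\|_{\mathrm{F}}^2$). *)

theory Defs
  imports "Jordan_Normal_Form.Char_Poly" "HOL-Library.Extended_Real"
begin

definition vnorm :: "real vec \<Rightarrow> real" where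
  "vnorm x = sqrt (x \<bullet> x)"

definition fro_norm :: "real mat \<Rightarrow> real" where
  "fro_norm A = sqrt (\<Sum>i<dim_row A. \<Sum>j<dim_col A. (A $$ (i,j))\<^sup>2)"

definition op_norm :: "real mat \<Rightarrow> real" where
  "op_norm A = Sup {vnorm (A *\<^sub>v x) | x. x \<in> carrier_vec (dim_col A) \<and> vnorm x = 1}"

definition orthonormal_cols :: "real mat \<Rightarrow> bool" where
  "orthonormal_cols V \<longleftrightarrow> transpose_mat V * V = 1\<^sub>m (dim_col V)"

definition singular_values :: "real mat \<Rightarrow> nat \<Rightarrow> real" where
  "singular_values M = (SOME \<sigma>.
     (\<forall>i j. i \<le> j \<longrightarrow> j < dim_col M \<longrightarrow> \<sigma> j \<le> \<sigma> i) \<and>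
     (\<forall>i < dim_col M. 0 \<le> \<sigma> i) \<and>
     char_poly (transpose_mat M * M) = (\<Prod>i<dim_col M. [:- ((\<sigma> i)\<^sup>2), 1:]))"

definition sin_theta :: "real mat \<Rightarrow> real mat \<Rightarrow> real mat" where
  "sin_theta Vh V = (let M = transpose_mat Vh * V; \<sigma> = singular_values M in
      mat (dim_col M) (dim_col M) (\<lambda>(i,j). if i = j then sin (arccos (\<sigma> i)) else 0))"

definition eigengap :: "(nat \<Rightarrow> real) \<Rightarrow> nat \<Rightarrow> nat \<Rightarrow> nat \<Rightarrow> ereal" where
  "eigengap lam p r s =
     min (if r = 1 then \<infinity> else ereal (lam (r - 1) - lam r))
         (if s = p then \<infinity> else ereal (lam s - lam (s + 1)))"

end

theory Submission
  imports Defs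
begin
definition orthset :: "nat \<Rightarrow> nat set \<Rightarrow> (nat \<Rightarrow> real vec) \<Rightarrow> bool" where
  "orthset n J u \<longleftrightarrow> (\<forall>i\<in>J. u i \<in> carrier_vec n) \<and>
     (\<forall>i\<in>J. \<forall>k\<in>J. u i \<bullet> u k = (if i = k then 1 else 0))"

lemma kernel_exists:
  assumes fin: "finite F" and F: "F \<subseteq> carrier_vec n" and c: "card F < n"
  shows "\<exists>x\<in>carrier_vec n. x \<noteq> 0\<^sub>v n \<and> (\<forall>v\<in>F. v \<bullet> x = (0::real))"
proof -
  obtain vs where vs: "set vs = F" "distinct vs" using finite_distinct_list[OF fin] by blast
  have len: "length vs < n" using vs c distinct_card by fastforce
  define c where "c = (\<lambda>i. if i < length vs then vs ! i else 0\<^sub>v n)"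
  have cc: "c \<in> {0..<n} \<rightarrow> carrier_vec n" using vs F unfolding c_def by (auto, metis nth_mem subsetD)
  define A :: "real mat" where "A = mat\<^sub>r n n (\<lambda>i. if i = n - 1 then 0\<^sub>v n else c i)"
  have A: "A \<in> carrier_mat n n" unfolding A_def by auto
  have "det A = 0" unfolding A_def by (rule det_row_0[OF _ cc], insert len, auto)
  then obtain x where x: "x \<in> carrier_vec n" "x \<noteq> 0\<^sub>v n" "A *\<^sub>v x = 0\<^sub>v n"
    using det_0_iff_vec_prod_zero[OF A] by blast
  have "\<forall>v\<in>F. v \<bullet> x = 0"
  proof
    fix v assume "v \<in> F"
    then obtain i where i: "i < length vs" "v = vs ! i" using vs by (metis in_set_conv_nth)
    have "(A *\<^sub>v x) $ i = row A i \<bullet> x" using i len A by auto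
    also have "row A i = vs ! i" using i len vs F unfolding A_def c_def
      by (subst row_mat_of_row_fun, auto, metis nth_mem subsetD carrier_vecD)
    finally show "v \<bullet> x = 0" using x(3) i len by auto
  qed
  thus ?thesis using x by blast
qed

lemma dot_self_ge0: "(x::real vec) \<bullet> x \<ge> 0"
  unfolding scalar_prod_def by (auto intro: sum_nonneg)

lemma dot_self_pos: "(x::real vec) \<in> carrier_vec n \<Longrightarrow> x \<noteq> 0\<^sub>v n \<Longrightarrow> x \<bullet> x > 0"
  using conjugate_square_greater_0_vec[of x n] by simp

lemma normalize_unit:
  assumes "(x::real vec) \<in> carrier_vec n" "x \<noteq> 0\<^sub>v n"
  shows "((1 / sqrt (x \<bullet> x)) \<cdot>\<^sub>v x) \<bullet> ((1 / sqrt (x \<bullet> x)) \<cdot>\<^sub>v x) = 1"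
proof -
  have p: "x \<bullet> x > 0" using dot_self_pos[OF assms] .
  have "((1 / sqrt (x \<bullet> x)) \<cdot>\<^sub>v x) \<bullet> ((1 / sqrt (x \<bullet> x)) \<cdot>\<^sub>v x)
      = (1 / sqrt (x \<bullet> x)) * ((1 / sqrt (x \<bullet> x)) * (x \<bullet> x))"
    using assms by simp
  also have "\<dots> = 1" using p by (simp add: field_simps)
  finally show ?thesis .
qed

lemma unit_orth_exists:
  assumes fin: "finite F" and F: "F \<subseteq> carrier_vec n" and c: "card F < n"
  shows "\<exists>x\<in>carrier_vec n. x \<bullet> x = (1::real) \<and> (\<forall>v\<in>F. v \<bullet> x = 0)"
proof -
  obtain x where x: "x \<in> carrier_vec n" "x \<noteq> 0\<^sub>v n" "\<forall>v\<in>F. v \<bullet> x = 0"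
    using kernel_exists[OF assms] by blast
  define y where "y = (1 / sqrt (x \<bullet> x)) \<cdot>\<^sub>v x"
  have "y \<in> carrier_vec n" using x unfolding y_def by auto
  moreover have "y \<bullet> y = 1" unfolding y_def by (rule normalize_unit[OF x(1,2)])
  moreover have "\<forall>v\<in>F. v \<bullet> y = 0" using x F unfolding y_def
    by (auto simp: scalar_prod_smult_distrib[of _ n])
  ultimately show ?thesis by blast
qed

lemma orth_complete_aux:
  "card ({..<n} - J) = m \<Longrightarrow> orthset n J u \<Longrightarrow> J \<subseteq> {..<n} \<Longrightarrow>
    \<exists>w. orthset n {..<n} w \<and> (\<forall>i\<in>J. w i = u i)"
proof (induction m arbitrary: J u)
  case 0
  then have "J = {..<n}" by auto
  then show ?case using 0 by blast
next
  case (Suc m)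
  then obtain i0 where i0: "i0 \<in> {..<n} - J" by (metis card.empty empty_iff nat.distinct(1) subsetI subset_antisym)
  have finJ: "finite J" using Suc(4) finite_subset by blast
  have cJ: "card J < n"
    using psubset_card_mono[of "{..<n}" J] Suc(4) i0 by auto
  have F: "u ` J \<subseteq> carrier_vec n" using Suc(3) unfolding orthset_def by auto
  have cF: "card (u ` J) < n" using card_image_le[OF finJ, of u] cJ by linarith
  obtain x where x: "x \<in> carrier_vec n" "x \<bullet> x = 1" "\<forall>v\<in>u ` J. v \<bullet> x = 0"
    using unit_orth_exists[OF _ F cF] finJ by blast
  define u' where "u' = u(i0 := x)"
  have i0J: "i0 \<notin> J" using i0 by auto
  have orth': "orthset n (insert i0 J) u'"
    unfolding orthset_def
  proof (intro conjI ballI)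
    fix i assume "i \<in> insert i0 J" then show "u' i \<in> carrier_vec n"
      using x Suc(3) unfolding u'_def orthset_def by auto
  next
    fix i k assume ik: "i \<in> insert i0 J" "k \<in> insert i0 J"
    show "u' i \<bullet> u' k = (if i = k then 1 else 0)"
    proof (cases "i = i0")
      case True
      show ?thesis
      proof (cases "k = i0")
        case True then show ?thesis using \<open>i = i0\<close> x unfolding u'_def by auto
      next
        case False
        then have k: "k \<in> J" using ik by auto
        have "u k \<bullet> x = 0" using x k by auto
        then have "x \<bullet> u k = 0" using comm_scalar_prod[of x n "u k"] x F k by auto
        then show ?thesis using True False k i0J unfolding u'_def by auto
      qed
    next
      case False
      then have i: "i \<in> J" using ik by auto
      show ?thesis
      proof (cases "k = i0")
        case True then show ?thesis using x i i0J False unfolding u'_def by auto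
      next
        case False
        then have "k \<in> J" using ik by auto
        then show ?thesis using i Suc(3) \<open>i \<noteq> i0\<close> False unfolding u'_def orthset_def by auto
      qed
    qed
  qed
  have "card ({..<n} - insert i0 J) = m"
    using Suc(2) i0 by (metis Diff_insert card_Diff_singleton diff_Suc_1 finite_Diff finite_lessThan)
  from Suc(1)[OF this orth'] Suc(4) i0 obtain w where
    w: "orthset n {..<n} w" "\<forall>i\<in>insert i0 J. w i = u' i" by auto
  then show ?case using i0J unfolding u'_def by force
qed

lemma orth_complete:
  "orthset n J u \<Longrightarrow> J \<subseteq> {..<n} \<Longrightarrow> \<exists>w. orthset n {..<n} w \<and> (\<forall>i\<in>J. w i = u i)"
  using orth_complete_aux by blast

lemma orthsetD: "orthset n J u \<Longrightarrow> i \<in> J \<Longrightarrow> u i \<in> carrier_vec n"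
  "orthset n J u \<Longrightarrow> i \<in> J \<Longrightarrow> k \<in> J \<Longrightarrow> u i \<bullet> u k = (if i = k then 1 else 0)"
  unfolding orthset_def by auto

lemma dot_sum: "y \<in> carrier_vec n \<Longrightarrow> x \<bullet> y = (\<Sum>i<n. x $ i * y $ i)"
  unfolding scalar_prod_def by (auto simp: atLeast0LessThan)

lemma onb_dual:
  assumes u: "orthset n {..<n} u" and i: "i < n" and j: "j < n"
  shows "(\<Sum>k<n. u k $ i * u k $ j) = (if i = j then 1 else (0::real))"
proof -
  define U :: "real mat" where "U = mat n n (\<lambda>(i,k). u k $ i)"
  have U: "U \<in> carrier_mat n n" unfolding U_def by auto
  have cu: "\<And>k. k < n \<Longrightarrow> u k \<in> carrier_vec n" using u orthsetD by blast
  have "transpose_mat U * U = 1\<^sub>m n"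
  proof (rule eq_matI)
    fix a b assume ab: "a < dim_row (1\<^sub>m n :: real mat)" "b < dim_col (1\<^sub>m n :: real mat)"
    have "(transpose_mat U * U) $$ (a,b) = (\<Sum>i<n. u a $ i * u b $ i)"
      using ab U by (simp add: scalar_prod_def U_def atLeast0LessThan)
    also have "\<dots> = u a \<bullet> u b" using dot_sum[OF cu[of b]] ab by simp
    also have "\<dots> = 1\<^sub>m n $$ (a,b)" using orthsetD(2)[OF u, of a b] ab by auto
    finally show "(transpose_mat U * U) $$ (a,b) = 1\<^sub>m n $$ (a,b)" .
  qed (insert U, auto)
  then have UU: "U * transpose_mat U = 1\<^sub>m n"
    using mat_mult_left_right_inverse[of "transpose_mat U" n U] U by auto
  have "(U * transpose_mat U) $$ (i,j) = (\<Sum>k<n. u k $ i * u k $ j)"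
    using i j U by (simp add: scalar_prod_def U_def atLeast0LessThan)
  then show ?thesis using UU i j by auto
qed

lemma onb_expand:
  assumes u: "orthset n {..<n} u" and x: "x \<in> carrier_vec n" and i: "i < n"
  shows "x $ i = (\<Sum>k<n. (u k \<bullet> x) * u k $ i)"
proof -
  have cu: "\<And>k. k < n \<Longrightarrow> u k \<in> carrier_vec n" using u orthsetD by blast
  have "(\<Sum>k<n. (u k \<bullet> x) * u k $ i) = (\<Sum>k<n. (\<Sum>j<n. u k $ j * x $ j) * u k $ i)"
    using dot_sum[OF x] by simp
  also have "\<dots> = (\<Sum>j<n. x $ j * (\<Sum>k<n. u k $ j * u k $ i))"
    unfolding sum_distrib_left sum_distrib_right by (subst sum.swap) (simp add: ac_simps)
  also have "\<dots> = (\<Sum>j<n. x $ j * (if j = i then 1 else 0))"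
    by (rule sum.cong, simp, subst onb_dual[OF u], auto simp: i)
  also have "\<dots> = x $ i" using i by (simp add: if_distrib cong: if_cong)
  finally show ?thesis by simp
qed

lemma onb_parseval:
  assumes u: "orthset n {..<n} u" and x: "x \<in> carrier_vec n" and y: "y \<in> carrier_vec n"
  shows "x \<bullet> y = (\<Sum>k<n. (u k \<bullet> x) * (u k \<bullet> y))"
proof -
  have "x \<bullet> y = (\<Sum>i<n. (\<Sum>k<n. (u k \<bullet> x) * u k $ i) * y $ i)"
    using dot_sum[OF y] onb_expand[OF u x] by simp
  also have "\<dots> = (\<Sum>k<n. (u k \<bullet> x) * (\<Sum>i<n. u k $ i * y $ i))"
    unfolding sum_distrib_left sum_distrib_right by (subst sum.swap) (simp add: ac_simps)
  also have "\<dots> = (\<Sum>k<n. (u k \<bullet> x) * (u k \<bullet> y))"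
    using dot_sum[OF y] by simp
  finally show ?thesis .
qed

lemma onb_eqI:
  assumes u: "orthset n {..<n} u" and x: "x \<in> carrier_vec n" and y: "y \<in> carrier_vec n"
    and eq: "\<And>k. k < n \<Longrightarrow> u k \<bullet> x = u k \<bullet> y"
  shows "x = y"
proof (rule eq_vecI)
  fix i assume "i < dim_vec y"
  then have i: "i < n" using y by auto
  show "x $ i = y $ i" using onb_expand[OF u x i] onb_expand[OF u y i] eq by simp
qed (insert x y, auto)

lemma bessel:
  assumes u: "orthset n J u" and J: "J \<subseteq> {..<n}" and x: "x \<in> carrier_vec n"
  shows "(\<Sum>k\<in>J. (u k \<bullet> x)\<^sup>2) \<le> x \<bullet> x"
proof -
  obtain w where w: "orthset n {..<n} w" "\<forall>i\<in>J. w i = u i" using orth_complete[OF u J] by blast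
  have "(\<Sum>k\<in>J. (u k \<bullet> x)\<^sup>2) = (\<Sum>k\<in>J. (w k \<bullet> x)\<^sup>2)" using w by simp
  also have "\<dots> \<le> (\<Sum>k<n. (w k \<bullet> x)\<^sup>2)" by (rule sum_mono2, insert J, auto)
  also have "\<dots> = x \<bullet> x" using onb_parseval[OF w(1) x x] by (simp add: power2_eq_square)
  finally show ?thesis .
qed

lemma cauchy_schwarz:
  assumes x: "(x::real vec) \<in> carrier_vec n" and y: "y \<in> carrier_vec n"
  shows "(x \<bullet> y)\<^sup>2 \<le> (x \<bullet> x) * (y \<bullet> y)"
proof (cases "x = 0\<^sub>v n")
  case True then show ?thesis using x y by (simp add: dot_self_ge0)
next
  case False
  define c where "c = 1 / sqrt (x \<bullet> x)"
  have p: "x \<bullet> x > 0" using dot_self_pos[OF x False] .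
  have o: "orthset n {0} (\<lambda>_. c \<cdot>\<^sub>v x)" unfolding orthset_def c_def
    using normalize_unit[OF x False] x by auto
  have n0: "0 < n"
  proof (rule ccontr)
    assume "\<not> 0 < n"
    then have "x = 0\<^sub>v n" using x by (intro eq_vecI, auto)
    then show False using False by simp
  qed
  have "(\<Sum>k\<in>{0}. ((\<lambda>_. c \<cdot>\<^sub>v x) k \<bullet> y)\<^sup>2) \<le> y \<bullet> y"
    using bessel[OF o _ y] n0 by auto
  then have "(c * (x \<bullet> y))\<^sup>2 \<le> y \<bullet> y" using x y by simp
  then have "(x \<bullet> y)\<^sup>2 / (x \<bullet> x) \<le> y \<bullet> y" using p
    by (simp add: c_def power_mult_distrib power_divide real_sqrt_pow2 divide_simps)
  then show ?thesis using p by (simp add: field_simps mult.commute)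
qed

lemma sym_dot:
  assumes A: "A \<in> carrier_mat n n" and s: "transpose_mat A = A"
    and x: "x \<in> carrier_vec n" and y: "y \<in> carrier_vec n"
  shows "(A *\<^sub>v x) \<bullet> y = x \<bullet> ((A::real mat) *\<^sub>v y)"
  using transpose_vec_mult_scalar[OF A y x] s by simp

lemma dot_lincomb:
  assumes a: "a \<in> carrier_vec n" and f: "\<And>t. t \<in> T \<Longrightarrow> f t \<in> carrier_vec n" and T: "finite T"
  shows "a \<bullet> vec n (\<lambda>i. \<Sum>t\<in>T. c t * f t $ i) = (\<Sum>t\<in>T. c t * (a \<bullet> f t :: real))"
proof -
  have "a \<bullet> vec n (\<lambda>i. \<Sum>t\<in>T. c t * f t $ i) = (\<Sum>i<n. a $ i * (\<Sum>t\<in>T. c t * f t $ i))"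
    by (subst dot_sum[of _ n], auto)
  also have "\<dots> = (\<Sum>t\<in>T. c t * (\<Sum>i<n. a $ i * f t $ i))"
    unfolding sum_distrib_left by (subst sum.swap) (simp add: ac_simps)
  also have "\<dots> = (\<Sum>t\<in>T. c t * (a \<bullet> f t))"
    by (rule sum.cong, simp, subst dot_sum[OF f], auto)
  finally show ?thesis .
qed

lemma sym_real_eigvec:
  assumes A: "(A::real mat) \<in> carrier_mat n n" and s: "transpose_mat A = A" and n: "0 < n"
  shows "\<exists>\<mu> x. x \<in> carrier_vec n \<and> x \<noteq> 0\<^sub>v n \<and> A *\<^sub>v x = \<mu> \<cdot>\<^sub>v x"
proof -
  define Ac where "Ac = map_mat complex_of_real A"
  have Ac: "Ac \<in> carrier_mat n n" using A unfolding Ac_def by auto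
  obtain as where as: "char_poly Ac = (\<Prod>a\<leftarrow>as. [:- a, 1:])" "length as = n"
    using char_poly_factorized[OF Ac] by blast
  then obtain e where e: "e \<in> set as" using n by (cases as, auto)
  have "poly (char_poly Ac) e = 0" unfolding as(1) by (rule linear_poly_root[OF e])
  then have "eigenvalue Ac e" using eigenvalue_root_char_poly[OF Ac] by simp
  then obtain z where z: "z \<in> carrier_vec n" "z \<noteq> 0\<^sub>v n" "Ac *\<^sub>v z = e \<cdot>\<^sub>v z"
    unfolding eigenvalue_def eigenvector_def using Ac by auto
  have Asym: "\<And>i j. i < n \<Longrightarrow> j < n \<Longrightarrow> A $$ (i,j) = A $$ (j,i)"
    using s A by (metis carrier_matD(1) carrier_matD(2) index_transpose_mat(1))
  have Azi: "\<And>i. i < n \<Longrightarrow> (Ac *\<^sub>v z) $ i = (\<Sum>j<n. complex_of_real (A $$ (i,j)) * z $ j)"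
    using Ac z(1) A unfolding Ac_def by (auto simp: scalar_prod_def atLeast0LessThan)
  define h where "h = (\<Sum>i<n. \<Sum>j<n. cnj (z $ i) * complex_of_real (A $$ (i,j)) * z $ j)"
  define N where "N = (\<Sum>i<n. cnj (z $ i) * z $ i)"
  have hN: "h = e * N"
  proof -
    have "h = (\<Sum>i<n. cnj (z $ i) * (Ac *\<^sub>v z) $ i)"
      unfolding h_def by (rule sum.cong, simp, subst Azi, auto simp: sum_distrib_left ac_simps)
    also have "\<dots> = (\<Sum>i<n. cnj (z $ i) * (e * z $ i))"
      using z by (intro sum.cong, auto)
    finally show ?thesis unfolding N_def by (simp add: sum_distrib_left ac_simps)
  qed
  have hc: "cnj h = h"
  proof -
    have "cnj h = (\<Sum>i<n. \<Sum>j<n. z $ i * complex_of_real (A $$ (i,j)) * cnj (z $ j))"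
      unfolding h_def by (simp add: cnj_sum)
    also have "\<dots> = (\<Sum>j<n. \<Sum>i<n. z $ i * complex_of_real (A $$ (i,j)) * cnj (z $ j))"
      by (rule sum.swap)
    also have "\<dots> = h" unfolding h_def
      by (intro sum.cong refl, subst Asym, auto simp: ac_simps)
    finally show ?thesis .
  qed
  have Nr: "N = complex_of_real (\<Sum>i<n. (cmod (z $ i))\<^sup>2)"
    unfolding N_def of_real_sum by (intro sum.cong refl) (metis complex_norm_square mult.commute)
  obtain i0 where i0: "i0 < n" "z $ i0 \<noteq> 0" using z by (metis carrier_vecD eq_vecI index_zero_vec(1) index_zero_vec(2))
  have "(\<Sum>i<n. (cmod (z $ i))\<^sup>2) \<ge> (cmod (z $ i0))\<^sup>2"
    by (rule member_le_sum, insert i0, auto)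
  moreover have "(cmod (z $ i0))\<^sup>2 > 0" using i0 by simp
  ultimately have N0: "N \<noteq> 0" unfolding Nr by (metis less_le_trans of_real_eq_0_iff order_less_irrefl)
  have cN: "cnj N = N" unfolding Nr by simp
  have "cnj (e * N) = e * N" using hc hN by simp
  then have "cnj e * N = e * N" using cN by simp
  then have ee: "cnj e = e" using N0 by simp
  define \<mu> where "\<mu> = Re e"
  have "Im e = 0" using arg_cong[OF ee, of Im] by simp
  then have emu: "e = complex_of_real \<mu>" unfolding \<mu>_def by (simp add: complex_eq_iff)
  have "char_poly Ac = map_poly of_real (char_poly A)"
    unfolding Ac_def using of_real_hom.char_poly_hom[OF A] by simp
  then have "complex_of_real (poly (char_poly A) \<mu>) = 0"
    using \<open>poly (char_poly Ac) e = 0\<close> emu of_real_hom.poly_map_poly by metis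
  then have "poly (char_poly A) \<mu> = 0" by simp
  then have "eigenvalue A \<mu>" using eigenvalue_root_char_poly[OF A] by simp
  then show ?thesis unfolding eigenvalue_def eigenvector_def using A by auto
qed

lemma spectral_step:
  assumes A: "(A::real mat) \<in> carrier_mat n n" and s: "transpose_mat A = A"
    and k: "k < n" and u: "orthset n {..<k} u" and eig: "\<And>i. i < k \<Longrightarrow> A *\<^sub>v u i = \<mu> i \<cdot>\<^sub>v u i"
  shows "\<exists>z \<nu>. z \<in> carrier_vec n \<and> z \<bullet> z = 1 \<and> (\<forall>i<k. u i \<bullet> z = 0) \<and> A *\<^sub>v z = \<nu> \<cdot>\<^sub>v z"
proof -
  obtain w where w: "orthset n {..<n} w" "\<forall>i\<in>{..<k}. w i = u i"
    using orth_complete[OF u] k by auto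
  have wc: "\<And>i. i < n \<Longrightarrow> w i \<in> carrier_vec n" using w(1) orthsetD by blast
  have wo: "\<And>i j. i < n \<Longrightarrow> j < n \<Longrightarrow> w i \<bullet> w j = (if i = j then 1 else 0)"
    using w(1) orthsetD by blast
  define m where "m = n - k"
  have m: "0 < m" using k unfolding m_def by auto
  define C :: "real mat" where "C = mat m m (\<lambda>(s,t). w (k+s) \<bullet> (A *\<^sub>v w (k+t)))"
  have C: "C \<in> carrier_mat m m" unfolding C_def by auto
  have Cs: "transpose_mat C = C"
  proof (rule eq_matI)
    fix a b assume ab: "a < dim_row C" "b < dim_col C"
    then have ab': "k + a < n" "k + b < n" using C unfolding m_def by auto
    have "transpose_mat C $$ (a,b) = w (k+b) \<bullet> (A *\<^sub>v w (k+a))" using ab C unfolding C_def by auto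
    also have "\<dots> = (A *\<^sub>v w (k+b)) \<bullet> w (k+a)" using sym_dot[OF A s wc wc] ab' by simp
    also have "\<dots> = w (k+a) \<bullet> (A *\<^sub>v w (k+b))"
      by (rule comm_scalar_prod[of _ n], insert A wc ab', auto)
    also have "\<dots> = C $$ (a,b)" using ab C unfolding C_def by auto
    finally show "transpose_mat C $$ (a,b) = C $$ (a,b)" .
  qed (insert C, auto)
  obtain \<nu> y where y: "y \<in> carrier_vec m" "y \<noteq> 0\<^sub>v m" "C *\<^sub>v y = \<nu> \<cdot>\<^sub>v y"
    using sym_real_eigvec[OF C Cs m] by blast
  define z where "z = vec n (\<lambda>i. \<Sum>t\<in>{..<m}. y $ t * w (k+t) $ i)"
  have z: "z \<in> carrier_vec n" unfolding z_def by auto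
  have wkt: "\<And>t. t \<in> {..<m} \<Longrightarrow> w (k+t) \<in> carrier_vec n" using wc unfolding m_def by auto
  have wz: "\<And>j. j < n \<Longrightarrow> w j \<bullet> z = (if k \<le> j then y $ (j - k) else 0)"
  proof -
    fix j assume j: "j < n"
    have "w j \<bullet> z = (\<Sum>t\<in>{..<m}. y $ t * (w j \<bullet> w (k+t)))"
      unfolding z_def by (rule dot_lincomb[OF wc[OF j] wkt], auto)
    also have "\<dots> = (\<Sum>t\<in>{..<m}. (if t = j - k \<and> k \<le> j then y $ t else 0))"
      by (rule sum.cong, simp, subst wo, insert j, auto simp: m_def)
    also have "\<dots> = (if k \<le> j then y $ (j - k) else 0)"
      using j by (auto simp: m_def)
    finally show "w j \<bullet> z = (if k \<le> j then y $ (j - k) else 0)" .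
  qed
  have Az: "A *\<^sub>v z = \<nu> \<cdot>\<^sub>v z"
  proof (rule onb_eqI[OF w(1)])
    show "A *\<^sub>v z \<in> carrier_vec n" "\<nu> \<cdot>\<^sub>v z \<in> carrier_vec n" using A z by auto
    fix j assume j: "j < n"
    have "w j \<bullet> (A *\<^sub>v z) = (A *\<^sub>v w j) \<bullet> z" using sym_dot[OF A s wc[OF j] z] by simp
    also have "\<dots> = (\<Sum>t\<in>{..<m}. y $ t * ((A *\<^sub>v w j) \<bullet> w (k+t)))"
      unfolding z_def by (rule dot_lincomb[OF _ wkt], insert A wc[OF j], auto)
    also have "\<dots> = (\<Sum>t\<in>{..<m}. y $ t * (w j \<bullet> (A *\<^sub>v w (k+t))))"
      by (rule sum.cong, simp, subst sym_dot[OF A s wc[OF j] wkt], auto)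
    also have "\<dots> = w j \<bullet> (\<nu> \<cdot>\<^sub>v z)"
    proof (cases "j < k")
      case True
      then have wj: "w j = u j" using w(2) by auto
      have "(\<Sum>t\<in>{..<m}. y $ t * (w j \<bullet> (A *\<^sub>v w (k+t)))) = (\<Sum>t\<in>{..<m}. y $ t * ((A *\<^sub>v w j) \<bullet> w (k+t)))"
        by (rule sum.cong, simp, subst sym_dot[OF A s wc[OF j] wkt], auto)
      also have "\<dots> = (\<Sum>t\<in>{..<m}. y $ t * (\<mu> j * (w j \<bullet> w (k+t))))"
        by (rule sum.cong, simp, insert wj eig[OF True] wc[OF j] wkt, auto)
      also have "\<dots> = 0" by (rule sum.neutral, insert True wo j, auto simp: m_def)
      also have "0 = w j \<bullet> (\<nu> \<cdot>\<^sub>v z)" using wz[OF j] True z wc[OF j] by simp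
      finally show ?thesis .
    next
      case False
      define a where "a = j - k"
      have a: "a < m" "j = k + a" using False j unfolding a_def m_def by auto
      have "(\<Sum>t\<in>{..<m}. y $ t * (w j \<bullet> (A *\<^sub>v w (k+t)))) = (\<Sum>t<m. C $$ (a,t) * y $ t)"
        by (rule sum.cong, insert a, auto simp: C_def)
      also have "\<dots> = (C *\<^sub>v y) $ a" using a C y(1) by (simp add: dot_sum[of _ m] mult.commute)
      also have "\<dots> = \<nu> * y $ a" using y(3) a y(1) by simp
      also have "\<dots> = w j \<bullet> (\<nu> \<cdot>\<^sub>v z)" using wz[OF j] False z wc[OF j] a by simp
      finally show ?thesis .
    qed
    finally show "w j \<bullet> (A *\<^sub>v z) = w j \<bullet> (\<nu> \<cdot>\<^sub>v z)" .
  qed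
  have z0: "z \<noteq> 0\<^sub>v n"
  proof
    assume z0: "z = 0\<^sub>v n"
    obtain a where a: "a < m" "y $ a \<noteq> 0" using y(1,2)
      by (metis carrier_vecD eq_vecI index_zero_vec(1) index_zero_vec(2))
    have "w (k+a) \<bullet> z = y $ a" using wz[of "k+a"] a unfolding m_def by auto
    moreover have "w (k+a) \<bullet> z = 0" using z0 wc[of "k+a"] a unfolding m_def by auto
    ultimately show False using a by simp
  qed
  define z' where "z' = (1 / sqrt (z \<bullet> z)) \<cdot>\<^sub>v z"
  have "z' \<in> carrier_vec n" using z unfolding z'_def by auto
  moreover have "z' \<bullet> z' = 1" unfolding z'_def by (rule normalize_unit[OF z z0])
  moreover have "\<forall>i<k. u i \<bullet> z' = 0"
  proof (intro allI impI)
    fix i assume i: "i < k"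
    then have ui: "u i \<bullet> z = 0" "u i \<in> carrier_vec n" using wz[of i] w(2) k wc[of i] by auto
    then show "u i \<bullet> z' = 0" unfolding z'_def using scalar_prod_smult_distrib[of "u i" n z] z by auto
  qed
  moreover have "A *\<^sub>v z' = \<nu> \<cdot>\<^sub>v z'" unfolding z'_def
    using Az A z by (simp add: mult_mat_vec[of _ n n] smult_smult_assoc mult.commute)
  ultimately show ?thesis by blast
qed

lemma spectral_aux:
  assumes A: "(A::real mat) \<in> carrier_mat n n" and s: "transpose_mat A = A"
  shows "k \<le> n \<Longrightarrow> \<exists>u \<mu>. orthset n {..<k} u \<and> (\<forall>i<k. A *\<^sub>v u i = \<mu> i \<cdot>\<^sub>v u i)"
proof (induction k)
  case 0 then show ?case by (auto simp: orthset_def)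
next
  case (Suc k)
  then obtain u \<mu> where u: "orthset n {..<k} u" "\<forall>i<k. A *\<^sub>v u i = \<mu> i \<cdot>\<^sub>v u i" by auto
  obtain z \<nu> where z: "z \<in> carrier_vec n" "z \<bullet> z = 1" "\<forall>i<k. u i \<bullet> z = 0" "A *\<^sub>v z = \<nu> \<cdot>\<^sub>v z"
    using spectral_step[OF A s _ u(1)] u(2) Suc(2) by (metis Suc_le_lessD)
  have uc: "\<And>i. i < k \<Longrightarrow> u i \<in> carrier_vec n" using u(1) orthsetD by blast
  have "orthset n {..<Suc k} (u(k := z))" unfolding orthset_def
  proof (intro conjI ballI)
    fix i assume "i \<in> {..<Suc k}" then show "(u(k := z)) i \<in> carrier_vec n" using z uc by auto
  next
    fix i j assume ij: "i \<in> {..<Suc k}" "j \<in> {..<Suc k}"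
    have zu: "\<And>j. j < k \<Longrightarrow> z \<bullet> u j = 0" using comm_scalar_prod[of z n] z uc by metis
    show "(u(k := z)) i \<bullet> (u(k := z)) j = (if i = j then 1 else 0)"
      using ij z uc orthsetD(2)[OF u(1), of i j] zu
      by (cases "i = k"; cases "j = k"; auto simp: less_Suc_eq)
  qed
  moreover have "\<forall>i<Suc k. A *\<^sub>v (u(k := z)) i = (\<mu>(k := \<nu>)) i \<cdot>\<^sub>v (u(k := z)) i"
    using u(2) z(4) by (auto simp: less_Suc_eq)
  ultimately show ?case by blast
qed

lemma spectral:
  assumes A: "(A::real mat) \<in> carrier_mat n n" and s: "transpose_mat A = A"
  shows "\<exists>u \<mu>. orthset n {..<n} u \<and> (\<forall>i<n. A *\<^sub>v u i = \<mu> i \<cdot>\<^sub>v u i)"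
  using spectral_aux[OF A s, of n] by auto

definition umat :: "nat \<Rightarrow> (nat \<Rightarrow> real vec) \<Rightarrow> real mat" where
  "umat n u = mat n n (\<lambda>(i,k). u k $ i)"

lemma umat_carrier[simp]: "umat n u \<in> carrier_mat n n" unfolding umat_def by auto

lemma umat_orth:
  assumes u: "orthset n {..<n} u"
  shows "transpose_mat (umat n u) * umat n u = 1\<^sub>m n" "umat n u * transpose_mat (umat n u) = 1\<^sub>m n"
proof -
  define U where "U = umat n u"
  have U: "U \<in> carrier_mat n n" unfolding U_def by auto
  have cu: "\<And>k. k < n \<Longrightarrow> u k \<in> carrier_vec n" using u orthsetD by blast
  show 1: "transpose_mat (umat n u) * umat n u = 1\<^sub>m n" unfolding U_def[symmetric]
  proof (rule eq_matI)
    fix a b assume ab: "a < dim_row (1\<^sub>m n :: real mat)" "b < dim_col (1\<^sub>m n :: real mat)"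
    have "(transpose_mat U * U) $$ (a,b) = (\<Sum>i<n. u a $ i * u b $ i)"
      using ab U by (simp add: scalar_prod_def U_def umat_def atLeast0LessThan)
    also have "\<dots> = u a \<bullet> u b" using dot_sum[OF cu[of b]] ab by simp
    also have "\<dots> = 1\<^sub>m n $$ (a,b)" using orthsetD(2)[OF u, of a b] ab by auto
    finally show "(transpose_mat U * U) $$ (a,b) = 1\<^sub>m n $$ (a,b)" .
  qed (insert U, auto)
  then show "umat n u * transpose_mat (umat n u) = 1\<^sub>m n"
    using mat_mult_left_right_inverse[of "transpose_mat U" n U] U unfolding U_def by auto
qed

lemma eig_charpoly:
  assumes u: "orthset n {..<n} u" and A: "(A::real mat) \<in> carrier_mat n n"
    and eig: "\<And>i. i < n \<Longrightarrow> A *\<^sub>v u i = \<mu> i \<cdot>\<^sub>v u i"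
  shows "char_poly A = prod_list (map (\<lambda>x. [:-x, 1:]) (map \<mu> [0..<n]))"
proof -
  define U where "U = umat n u"
  have U: "U \<in> carrier_mat n n" unfolding U_def by auto
  have cu: "\<And>k. k < n \<Longrightarrow> u k \<in> carrier_vec n" using u orthsetD by blast
  define D :: "real mat" where "D = mat n n (\<lambda>(i,j). if i = j then \<mu> i else 0)"
  have D: "D \<in> carrier_mat n n" unfolding D_def by auto
  have colU: "\<And>k. k < n \<Longrightarrow> col U k = u k"
  proof -
    fix k assume k: "k < n"
    then have c: "u k \<in> carrier_vec n" by (rule cu)
    show "col U k = u k" by (rule eq_vecI, insert k c, auto simp: U_def umat_def)
  qed
  have AU: "A * U = U * D"
  proof (rule eq_matI)
    fix i k assume ik: "i < dim_row (U * D)" "k < dim_col (U * D)"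
    then have ik': "i < n" "k < n" using U D by auto
    have "(A * U) $$ (i,k) = (A *\<^sub>v col U k) $ i" using ik' A U by auto
    also have "\<dots> = \<mu> k * u k $ i" using eig[OF ik'(2)] colU[OF ik'(2)] ik' cu[OF ik'(2)] by simp
    also have "\<dots> = (\<Sum>j<n. U $$ (i,j) * D $$ (j,k))"
      using ik' by (simp add: D_def U_def umat_def if_distrib cong: if_cong)
    also have "\<dots> = (U * D) $$ (i,k)" using ik' U D by (simp add: scalar_prod_def atLeast0LessThan)
    finally show "(A * U) $$ (i,k) = (U * D) $$ (i,k)" .
  qed (insert A U D, auto)
  have "A = A * (U * transpose_mat U)" using umat_orth(2)[OF u] A unfolding U_def by simp
  also have "\<dots> = (A * U) * transpose_mat U" using A U by (simp add: assoc_mult_mat[of _ n n _ n _ n])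
  also have "\<dots> = U * D * transpose_mat U" unfolding AU ..
  finally have "similar_mat A D"
    by (intro similar_matI[of _ _ U "transpose_mat U" n], insert A U D umat_orth[OF u], auto simp: U_def)
  then have "char_poly A = char_poly D" by (rule char_poly_similar)
  also have "\<dots> = (\<Prod> a \<leftarrow> diag_mat D. [:- a, 1:])"
    by (rule char_poly_upper_triangular[OF D], auto simp: upper_triangular_def D_def)
  also have "diag_mat D = map \<mu> [0..<n]" unfolding diag_mat_def D_def by (auto intro: nth_equalityI)
  finally show ?thesis by (simp add: comp_def)
qed

lemma mset_charpoly:
  assumes "prod_list (map (\<lambda>x. [:-x, 1:]) xs) = prod_list (map (\<lambda>x. [:-x, 1::'a::idom:]) ys)"
  shows "mset xs = mset ys"
proof (rule multiset_eqI)
  fix a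
  have "\<And>zs. order a (prod_list (map (\<lambda>x. [:-x, 1::'a:]) zs)) = count (mset zs) a"
  proof -
    fix zs :: "'a list"
    have "order a (prod_list (map (\<lambda>x. [:-x, 1::'a:]) zs)) = sum_list (map (order a) (map (\<lambda>x. [:-x, 1::'a:]) zs))"
      by (rule order_prod_list, auto)
    also have "\<dots> = count (mset zs) a" by (induction zs, auto simp: order_linear')
    finally show "order a (prod_list (map (\<lambda>x. [:-x, 1::'a:]) zs)) = count (mset zs) a" .
  qed
  from this[of xs] this[of ys] assms show "count (mset xs) a = count (mset ys) a" by simp
qed

lemma sorted_eigbasis:
  assumes A: "(A::real mat) \<in> carrier_mat p p" and s: "transpose_mat A = A"
    and cp: "char_poly A = (\<Prod>i\<in>{1..p}. [:- lam i, 1:])"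
  shows "\<exists>u. orthset p {..<p} u \<and> (\<forall>k<p. A *\<^sub>v u k = lam (Suc k) \<cdot>\<^sub>v u k)"
proof -
  obtain u \<mu> where u: "orthset p {..<p} u" "\<forall>i<p. A *\<^sub>v u i = \<mu> i \<cdot>\<^sub>v u i"
    using spectral[OF A s] by blast
  have "char_poly A = prod_list (map (\<lambda>x. [:-x, 1:]) (map \<mu> [0..<p]))"
    using eig_charpoly[OF u(1) A] u(2) by blast
  moreover have "char_poly A = prod_list (map (\<lambda>x. [:-x, 1:]) (map lam [1..<Suc p]))"
  proof -
    have "(\<Prod>i\<in>{1..p}. [:- lam i, 1:]) = (\<Prod>i\<in>set [1..<Suc p]. [:- lam i, 1:])"
      by (simp only: set_upt atLeastLessThanSuc_atLeastAtMost)
    also have "\<dots> = prod_list (map (\<lambda>i. [:- lam i, 1:]) [1..<Suc p])"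
      by (rule prod.distinct_set_conv_list, simp)
    also have "\<dots> = prod_list (map (\<lambda>x. [:-x, 1:]) (map lam [1..<Suc p]))"
      by (simp only: map_map comp_def)
    finally show ?thesis unfolding cp .
  qed
  ultimately have "mset (map lam [1..<Suc p]) = mset (map \<mu> [0..<p])"
    using mset_charpoly by metis
  then obtain \<pi> where \<pi>: "\<pi> permutes {..<length (map \<mu> [0..<p])}"
    "permute_list \<pi> (map \<mu> [0..<p]) = map lam [1..<Suc p]"
    by (rule mset_eq_permutation)
  have \<pi>': "\<pi> permutes {..<p}" using \<pi>(1) by simp
  have lk: "\<And>k. k < p \<Longrightarrow> lam (Suc k) = \<mu> (\<pi> k)"
  proof -
    fix k assume k: "k < p"
    have "lam (Suc k) = map lam [1..<Suc p] ! k" using k by (simp del: upt_Suc)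
    also have "\<dots> = map \<mu> [0..<p] ! \<pi> k" unfolding \<pi>(2)[symmetric]
      by (rule permute_list_nth, insert \<pi> k, auto)
    also have "\<dots> = \<mu> (\<pi> k)" using permutes_in_image[OF \<pi>'] k by auto
    finally show "lam (Suc k) = \<mu> (\<pi> k)" .
  qed
  have pk: "\<And>k. k < p \<Longrightarrow> \<pi> k < p" using permutes_in_image[OF \<pi>'] by auto
  have inj: "\<And>i k. \<pi> i = \<pi> k \<longleftrightarrow> i = k" using permutes_inj[OF \<pi>'] by (auto simp: inj_def)
  have "orthset p {..<p} (\<lambda>k. u (\<pi> k))"
    using u(1) pk inj unfolding orthset_def by auto
  moreover have "\<forall>k<p. A *\<^sub>v u (\<pi> k) = lam (Suc k) \<cdot>\<^sub>v u (\<pi> k)"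
    using u(2) pk lk by auto
  ultimately show ?thesis by blast
qed

lemma bilin_expand:
  fixes W :: "nat \<Rightarrow> nat \<Rightarrow> real"
  shows "(\<Sum>i\<in>I. \<Sum>k\<in>K. W i k * (\<Sum>t\<in>T. f t i) * (\<Sum>u\<in>U. g u k))
       = (\<Sum>t\<in>T. \<Sum>u\<in>U. \<Sum>i\<in>I. \<Sum>k\<in>K. W i k * f t i * g u k)"
proof -
  have "(\<Sum>i\<in>I. \<Sum>k\<in>K. W i k * (\<Sum>t\<in>T. f t i) * (\<Sum>u\<in>U. g u k))
      = (\<Sum>i\<in>I. \<Sum>k\<in>K. \<Sum>u\<in>U. \<Sum>t\<in>T. W i k * f t i * g u k)"
    by (simp add: sum_distrib_left sum_distrib_right mult.assoc)
  also have "\<dots> = (\<Sum>i\<in>I. \<Sum>k\<in>K. \<Sum>t\<in>T. \<Sum>u\<in>U. W i k * f t i * g u k)"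
    by (rule sum.cong[OF refl], rule sum.cong[OF refl], rule sum.swap)
  also have "\<dots> = (\<Sum>i\<in>I. \<Sum>t\<in>T. \<Sum>k\<in>K. \<Sum>u\<in>U. W i k * f t i * g u k)"
    by (rule sum.cong[OF refl], rule sum.swap)
  also have "\<dots> = (\<Sum>i\<in>I. \<Sum>t\<in>T. \<Sum>u\<in>U. \<Sum>k\<in>K. W i k * f t i * g u k)"
    by (rule sum.cong[OF refl], rule sum.cong[OF refl], rule sum.swap)
  also have "\<dots> = (\<Sum>t\<in>T. \<Sum>i\<in>I. \<Sum>u\<in>U. \<Sum>k\<in>K. W i k * f t i * g u k)"
    by (rule sum.swap)
  also have "\<dots> = (\<Sum>t\<in>T. \<Sum>u\<in>U. \<Sum>i\<in>I. \<Sum>k\<in>K. W i k * f t i * g u k)"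
    by (rule sum.cong[OF refl], rule sum.swap)
  finally show ?thesis .
qed

lemma telescope_rep:
  fixes a :: "nat \<Rightarrow> real"
  assumes i: "i < Suc m"
  shows "a i = (\<Sum>t<Suc m. (if i \<le> t then (if t = m then a m else a t - a (Suc t)) else 0))"
proof -
  have "(\<Sum>t<Suc m. (if i \<le> t then (if t = m then a m else a t - a (Suc t)) else 0))
      = (\<Sum>t<m. (if i \<le> t then a t - a (Suc t) else 0)) + a m"
    using i by (simp, intro sum.cong refl, auto)
  also have "(\<Sum>t<m. (if i \<le> t then a t - a (Suc t) else 0)) = (\<Sum>t\<in>{i..<m}. a t - a (Suc t))"
    by (rule sum.mono_neutral_cong_right, auto)
  also have "\<dots> = a i - a m"
    using sum_Suc_diff'[of i m "\<lambda>t. - a t"] i by (simp add: algebra_simps)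
  finally show ?thesis by simp
qed

lemma count_le: "t < n \<Longrightarrow> (\<Sum>i<n. (if i \<le> t then 1 else 0::real)) = real t + 1"
proof -
  assume t: "t < n"
  have "(\<Sum>i<n. (if i \<le> t then 1 else 0::real)) = (\<Sum>i\<in>{..t}. 1)"
    by (rule sum.mono_neutral_cong_right, insert t, auto)
  then show ?thesis by simp
qed

lemma ds_rearr:
  fixes a b :: "nat \<Rightarrow> real" and W :: "nat \<Rightarrow> nat \<Rightarrow> real"
  assumes a: "\<And>i j. i \<le> j \<Longrightarrow> j < n \<Longrightarrow> a j \<le> a i"
    and b: "\<And>i j. i \<le> j \<Longrightarrow> j < n \<Longrightarrow> b j \<le> b i"
    and W0: "\<And>i k. i < n \<Longrightarrow> k < n \<Longrightarrow> 0 \<le> W i k"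
    and row: "\<And>i. i < n \<Longrightarrow> (\<Sum>k<n. W i k) = 1"
    and col: "\<And>k. k < n \<Longrightarrow> (\<Sum>i<n. W i k) = 1"
  shows "(\<Sum>i<n. \<Sum>k<n. W i k * a i * b k) \<le> (\<Sum>i<n. a i * b i)"
proof (cases n)
  case 0 then show ?thesis by simp
next
  case (Suc m)
  define Da where "Da = (\<lambda>t. if t = m then a m else a t - a (Suc t))"
  define Db where "Db = (\<lambda>t. if t = m then b m else b t - b (Suc t))"
  define f where "f = (\<lambda>t i. if i \<le> t then Da t else 0)"
  define g where "g = (\<lambda>u k. if k \<le> u then Db u else 0)"
  have ha: "\<And>i. i < n \<Longrightarrow> a i = (\<Sum>t<n. f t i)"
    unfolding f_def Da_def Suc by (rule telescope_rep)
  have hb: "\<And>k. k < n \<Longrightarrow> b k = (\<Sum>u<n. g u k)"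
    unfolding g_def Db_def Suc by (rule telescope_rep)
  define G where "G = (\<lambda>X t u. (\<Sum>i<n. \<Sum>k<n. X i k * (if i \<le> t then 1 else 0) * (if k \<le> u then 1 else (0::real))))"
  have S: "\<And>X. (\<Sum>i<n. \<Sum>k<n. X i k * a i * b k) = (\<Sum>t<n. \<Sum>u<n. Da t * Db u * G X t u)"
  proof -
    fix X :: "nat \<Rightarrow> nat \<Rightarrow> real"
    have "(\<Sum>i<n. \<Sum>k<n. X i k * a i * b k) = (\<Sum>i<n. \<Sum>k<n. X i k * (\<Sum>t<n. f t i) * (\<Sum>u<n. g u k))"
      by (intro sum.cong refl, insert ha hb, auto)
    also have "\<dots> = (\<Sum>t<n. \<Sum>u<n. \<Sum>i<n. \<Sum>k<n. X i k * f t i * g u k)" by (rule bilin_expand)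
    also have "\<dots> = (\<Sum>t<n. \<Sum>u<n. Da t * Db u * G X t u)"
      unfolding G_def f_def g_def
      by (intro sum.cong refl, simp add: sum_distrib_left, intro sum.cong refl, auto)
    finally show "(\<Sum>i<n. \<Sum>k<n. X i k * a i * b k) = (\<Sum>t<n. \<Sum>u<n. Da t * Db u * G X t u)" .
  qed
  define Idm :: "nat \<Rightarrow> nat \<Rightarrow> real" where "Idm = (\<lambda>i k. if i = k then 1 else (0::real))"
  have SI1: "\<And>i. i < n \<Longrightarrow> (\<Sum>k<n. Idm i k * a i * b k) = a i * b i"
  proof -
    fix i assume i: "i < n"
    have "(\<Sum>k<n. Idm i k * a i * b k) = (\<Sum>k<n. if k = i then a i * b i else 0)"
      by (rule sum.cong, auto simp: Idm_def)
    also have "\<dots> = a i * b i" using i by simp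
    finally show "(\<Sum>k<n. Idm i k * a i * b k) = a i * b i" .
  qed
  have SI: "(\<Sum>i<n. a i * b i) = (\<Sum>i<n. \<Sum>k<n. Idm i k * a i * b k)"
    using SI1 by simp
  have GI: "\<And>t u. t < n \<Longrightarrow> u < n \<Longrightarrow> G Idm t u = real (min t u) + 1"
  proof -
    fix t u assume tu: "t < n" "u < n"
    have inner: "\<And>i. i < n \<Longrightarrow> (\<Sum>k<n. Idm i k * (if i \<le> t then 1 else 0) * (if k \<le> u then 1 else (0::real)))
       = (if i \<le> min t u then 1 else 0)"
    proof -
      fix i assume i: "i < n"
      have "(\<Sum>k<n. Idm i k * (if i \<le> t then 1 else 0) * (if k \<le> u then 1 else (0::real)))
         = (\<Sum>k<n. if k = i then (if i \<le> min t u then 1 else 0) else 0)"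
        by (rule sum.cong, auto simp: Idm_def)
      also have "\<dots> = (if i \<le> min t u then 1 else 0)" using i by simp
      finally show "(\<Sum>k<n. Idm i k * (if i \<le> t then 1 else 0) * (if k \<le> u then 1 else (0::real)))
       = (if i \<le> min t u then 1 else 0)" .
    qed
    have "G Idm t u = (\<Sum>i<n. (if i \<le> min t u then 1 else 0))"
      unfolding G_def using inner by simp
    also have "\<dots> = real (min t u) + 1" by (rule count_le, insert tu, auto)
    finally show "G Idm t u = real (min t u) + 1" .
  qed
  have GW1: "\<And>t u. t < n \<Longrightarrow> u < n \<Longrightarrow> G W t u \<le> real t + 1"
  proof -
    fix t u assume tu: "t < n" "u < n"
    have "G W t u \<le> (\<Sum>i<n. \<Sum>k<n. W i k * (if i \<le> t then 1 else 0))"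
      unfolding G_def by (intro sum_mono, insert W0, auto)
    also have "\<dots> = (\<Sum>i<n. (if i \<le> t then 1 else 0))"
      by (intro sum.cong refl, simp add: sum_distrib_right[symmetric] row)
    also have "\<dots> = real t + 1" by (rule count_le[OF tu(1)])
    finally show "G W t u \<le> real t + 1" .
  qed
  have GW2: "\<And>t u. t < n \<Longrightarrow> u < n \<Longrightarrow> G W t u \<le> real u + 1"
  proof -
    fix t u assume tu: "t < n" "u < n"
    have "G W t u \<le> (\<Sum>i<n. \<Sum>k<n. W i k * (if k \<le> u then 1 else 0))"
      unfolding G_def by (intro sum_mono, insert W0, auto)
    also have "\<dots> = (\<Sum>k<n. \<Sum>i<n. W i k * (if k \<le> u then 1 else 0))" by (rule sum.swap)
    also have "\<dots> = (\<Sum>k<n. (if k \<le> u then 1 else 0))"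
      by (intro sum.cong refl, simp add: sum_distrib_right[symmetric] col)
    also have "\<dots> = real u + 1" by (rule count_le[OF tu(2)])
    finally show "G W t u \<le> real u + 1" .
  qed
  have GWm1: "\<And>u. u < n \<Longrightarrow> G W m u = G Idm m u"
  proof -
    fix u assume u: "u < n"
    have "G W m u = (\<Sum>k<n. \<Sum>i<n. W i k * (if k \<le> u then 1 else 0))"
      unfolding G_def using Suc by (subst sum.swap, intro sum.cong refl, auto)
    also have "\<dots> = (\<Sum>k<n. (if k \<le> u then 1 else 0))"
      by (intro sum.cong refl, simp add: sum_distrib_right[symmetric] col)
    also have "\<dots> = real u + 1" by (rule count_le[OF u])
    also have "\<dots> = G Idm m u" using GI[of m u] u Suc by auto
    finally show "G W m u = G Idm m u" .
  qed
  have GWm2: "\<And>t. t < n \<Longrightarrow> G W t m = G Idm t m"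
  proof -
    fix t assume t: "t < n"
    have "G W t m = (\<Sum>i<n. \<Sum>k<n. W i k * (if i \<le> t then 1 else 0))"
      unfolding G_def using Suc by (intro sum.cong refl, auto)
    also have "\<dots> = (\<Sum>i<n. (if i \<le> t then 1 else 0))"
      by (intro sum.cong refl, simp add: sum_distrib_right[symmetric] row)
    also have "\<dots> = real t + 1" by (rule count_le[OF t])
    also have "\<dots> = G Idm t m" using GI[of t m] t Suc by auto
    finally show "G W t m = G Idm t m" .
  qed
  have "(\<Sum>i<n. \<Sum>k<n. W i k * a i * b k) = (\<Sum>t<n. \<Sum>u<n. Da t * Db u * G W t u)" by (rule S)
  also have "\<dots> \<le> (\<Sum>t<n. \<Sum>u<n. Da t * Db u * G Idm t u)"
  proof (intro sum_mono)
    fix t u assume tu: "t \<in> {..<n}" "u \<in> {..<n}"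
    show "Da t * Db u * G W t u \<le> Da t * Db u * G Idm t u"
    proof (cases "t = m \<or> u = m")
      case True then show ?thesis using GWm1 GWm2 tu by auto
    next
      case False
      then have tu': "t < m" "u < m" using tu Suc by auto
      have "Da t \<ge> 0" unfolding Da_def using tu' a[of t "Suc t"] Suc by auto
      moreover have "Db u \<ge> 0" unfolding Db_def using tu' b[of u "Suc u"] Suc by auto
      moreover have "G W t u \<le> G Idm t u" using GI[of t u] GW1[of t u] GW2[of t u] tu
        by (auto simp: min_def)
      ultimately show ?thesis by (simp add: mult_left_mono)
    qed
  qed
  also have "\<dots> = (\<Sum>i<n. a i * b i)" unfolding SI by (rule S[symmetric])
  finally show ?thesis .
qed

definition fsq :: "real mat \<Rightarrow> real" where
  "fsq M = (\<Sum>i<dim_row M. \<Sum>j<dim_col M. (M $$ (i,j))\<^sup>2)"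

lemma fro_fsq: "fro_norm M = sqrt (fsq M)" unfolding fro_norm_def fsq_def ..

lemma fsq_nonneg: "fsq M \<ge> 0" unfolding fsq_def by (auto intro!: sum_nonneg)

lemma vnorm_sq: "(vnorm x)\<^sup>2 = x \<bullet> x" unfolding vnorm_def by (rule real_sqrt_pow2[OF dot_self_ge0])

lemma mat_vec_carrier[simp]: "A \<in> carrier_mat m p \<Longrightarrow> A *\<^sub>v x \<in> carrier_vec m"
  by (intro carrier_vecI, auto)

lemma vnorm_nonneg: "vnorm x \<ge> 0" unfolding vnorm_def by (simp add: dot_self_ge0)

lemma onb_norm:
  assumes u: "orthset n {..<n} u" and x: "x \<in> carrier_vec n"
  shows "x \<bullet> x = (\<Sum>k<n. (u k \<bullet> x)\<^sup>2)"
  using onb_parseval[OF u x x] by (simp add: power2_eq_square)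

lemma dot_sq_sum: "(x::real vec) \<in> carrier_vec n \<Longrightarrow> x \<bullet> x = (\<Sum>i<n. (x $ i)\<^sup>2)"
  by (simp add: dot_sum power2_eq_square)

lemma fsq_family:
  assumes M: "(M::real mat) \<in> carrier_mat m p" and u: "\<And>k. k \<in> J \<Longrightarrow> u k \<in> carrier_vec p" and J: "finite J"
  shows "(\<Sum>k\<in>J. (M *\<^sub>v u k) \<bullet> (M *\<^sub>v u k)) = (\<Sum>a<m. \<Sum>k\<in>J. (u k \<bullet> row M a)\<^sup>2)"
proof -
  have "(\<Sum>k\<in>J. (M *\<^sub>v u k) \<bullet> (M *\<^sub>v u k)) = (\<Sum>k\<in>J. \<Sum>a<m. (row M a \<bullet> u k)\<^sup>2)"
  proof (rule sum.cong[OF refl])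
    fix k assume "k \<in> J"
    have "(M *\<^sub>v u k) \<bullet> (M *\<^sub>v u k) = (\<Sum>a<m. ((M *\<^sub>v u k) $ a)\<^sup>2)"
      by (rule dot_sq_sum, rule mat_vec_carrier[OF M])
    also have "\<dots> = (\<Sum>a<m. (row M a \<bullet> u k)\<^sup>2)" using M by (intro sum.cong refl, auto)
    finally show "(M *\<^sub>v u k) \<bullet> (M *\<^sub>v u k) = (\<Sum>a<m. (row M a \<bullet> u k)\<^sup>2)" .
  qed
  also have "\<dots> = (\<Sum>a<m. \<Sum>k\<in>J. (row M a \<bullet> u k)\<^sup>2)" by (rule sum.swap)
  also have "\<dots> = (\<Sum>a<m. \<Sum>k\<in>J. (u k \<bullet> row M a)\<^sup>2)"
    by (intro sum.cong refl, subst comm_scalar_prod[of _ p], insert M u, auto)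
  finally show ?thesis .
qed

lemma fsq_rows: assumes M: "(M::real mat) \<in> carrier_mat m p" shows "fsq M = (\<Sum>a<m. row M a \<bullet> row M a)"
proof -
  have d: "dim_row M = m" "dim_col M = p" using M by auto
  show ?thesis unfolding fsq_def d by (intro sum.cong refl, subst dot_sq_sum[of _ p], insert d, auto)
qed

lemma fsq_onb:
  assumes M: "(M::real mat) \<in> carrier_mat m p" and u: "orthset p {..<p} u"
  shows "fsq M = (\<Sum>k<p. (M *\<^sub>v u k) \<bullet> (M *\<^sub>v u k))"
proof -
  have uc: "\<And>k. k \<in> {..<p} \<Longrightarrow> u k \<in> carrier_vec p" using u orthsetD by blast
  have "(\<Sum>k<p. (M *\<^sub>v u k) \<bullet> (M *\<^sub>v u k)) = (\<Sum>a<m. \<Sum>k<p. (u k \<bullet> row M a)\<^sup>2)"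
    by (rule fsq_family[OF M uc], auto)
  also have "\<dots> = (\<Sum>a<m. row M a \<bullet> row M a)"
    by (intro sum.cong refl, subst onb_norm[OF u], insert M, auto)
  finally show ?thesis using fsq_rows[OF M] by simp
qed

lemma fsq_bessel:
  assumes M: "(M::real mat) \<in> carrier_mat m p" and u: "orthset p J u" and J: "J \<subseteq> {..<p}"
  shows "(\<Sum>k\<in>J. (M *\<^sub>v u k) \<bullet> (M *\<^sub>v u k)) \<le> fsq M"
proof -
  have uc: "\<And>k. k \<in> J \<Longrightarrow> u k \<in> carrier_vec p" using u orthsetD by blast
  have fJ: "finite J" using J finite_subset by blast
  have "(\<Sum>k\<in>J. (M *\<^sub>v u k) \<bullet> (M *\<^sub>v u k)) = (\<Sum>a<m. \<Sum>k\<in>J. (u k \<bullet> row M a)\<^sup>2)"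
    by (rule fsq_family[OF M uc fJ])
  also have "\<dots> \<le> (\<Sum>a<m. row M a \<bullet> row M a)"
    by (intro sum_mono bessel[OF u J], insert M, auto)
  finally show ?thesis using fsq_rows[OF M] by simp
qed

lemma quad_form:
  assumes A: "(A::real mat) \<in> carrier_mat n n" and s: "transpose_mat A = A"
    and u: "orthset n {..<n} u" and eig: "\<And>k. k < n \<Longrightarrow> A *\<^sub>v u k = \<mu> k \<cdot>\<^sub>v u k"
    and x: "x \<in> carrier_vec n"
  shows "x \<bullet> (A *\<^sub>v x) = (\<Sum>k<n. \<mu> k * (u k \<bullet> x)\<^sup>2)"
proof -
  have uc: "\<And>k. k < n \<Longrightarrow> u k \<in> carrier_vec n" using u orthsetD by blast
  have "x \<bullet> (A *\<^sub>v x) = (\<Sum>k<n. (u k \<bullet> x) * (u k \<bullet> (A *\<^sub>v x)))"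
    by (rule onb_parseval[OF u x], insert A x, auto)
  also have "\<dots> = (\<Sum>k<n. \<mu> k * (u k \<bullet> x)\<^sup>2)"
  proof (intro sum.cong refl)
    fix k assume "k \<in> {..<n}" then have k: "k < n" by auto
    have "u k \<bullet> (A *\<^sub>v x) = (A *\<^sub>v u k) \<bullet> x" using sym_dot[OF A s uc[OF k] x] by simp
    also have "\<dots> = \<mu> k * (u k \<bullet> x)" using eig[OF k] uc[OF k] x by simp
    finally show "(u k \<bullet> x) * (u k \<bullet> (A *\<^sub>v x)) = \<mu> k * (u k \<bullet> x)\<^sup>2"
      by (simp add: power2_eq_square)
  qed
  finally show ?thesis .
qed

lemma op_norm_bdd:
  assumes E: "(E::real mat) \<in> carrier_mat m p"
  shows "bdd_above {vnorm (E *\<^sub>v x) | x. x \<in> carrier_vec (dim_col E) \<and> vnorm x = 1}"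
proof (rule bdd_aboveI)
  fix y assume "y \<in> {vnorm (E *\<^sub>v x) | x. x \<in> carrier_vec (dim_col E) \<and> vnorm x = 1}"
  then obtain x where x: "x \<in> carrier_vec p" "vnorm x = 1" "y = vnorm (E *\<^sub>v x)" using E by auto
  have xx: "x \<bullet> x = 1" using vnorm_sq[of x] x by simp
  have "(E *\<^sub>v x) \<bullet> (E *\<^sub>v x) = (\<Sum>a<m. (row E a \<bullet> x)\<^sup>2)"
    by (subst dot_sq_sum[of _ m], insert E, auto)
  also have "\<dots> \<le> (\<Sum>a<m. (row E a \<bullet> row E a) * (x \<bullet> x))"
    by (intro sum_mono cauchy_schwarz[of _ p], insert E x, auto)
  also have "\<dots> = fsq E" using fsq_rows[OF E] xx by simp
  finally have "y\<^sup>2 \<le> fsq E" using x(3) vnorm_sq by metis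
  then show "y \<le> sqrt (fsq E)" using x(3) vnorm_nonneg real_le_rsqrt by blast
qed

lemma op_norm_bound:
  assumes E: "(E::real mat) \<in> carrier_mat m p" and x: "x \<in> carrier_vec p"
  shows "vnorm (E *\<^sub>v x) \<le> op_norm E * vnorm x"
proof (cases "x = 0\<^sub>v p")
  case True
  then have "E *\<^sub>v x = 0\<^sub>v m" using E by auto
  then show ?thesis using True by (simp add: vnorm_def)
next
  case False
  have p: "x \<bullet> x > 0" using dot_self_pos[OF x False] .
  define c where "c = 1 / sqrt (x \<bullet> x)"
  define y where "y = c \<cdot>\<^sub>v x"
  have c: "c > 0" unfolding c_def using p by simp
  have y: "y \<in> carrier_vec p" "vnorm y = 1" unfolding y_def vnorm_def c_def
    using normalize_unit[OF x False] x by auto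
  have "vnorm (E *\<^sub>v y) \<le> op_norm E" unfolding op_norm_def
    by (rule cSup_upper[OF _ op_norm_bdd[OF E]], insert y E, auto)
  moreover have "E *\<^sub>v y = c \<cdot>\<^sub>v (E *\<^sub>v x)" unfolding y_def using E x by (simp add: mult_mat_vec)
  moreover have "vnorm (c \<cdot>\<^sub>v (E *\<^sub>v x)) = c * vnorm (E *\<^sub>v x)" unfolding vnorm_def using c E x
    by (simp add: real_sqrt_mult)
  moreover have cx: "c * vnorm x = 1" unfolding c_def vnorm_def using p by simp
  ultimately have a: "c * vnorm (E *\<^sub>v x) \<le> op_norm E" by simp
  have "vnorm (E *\<^sub>v x) = (c * vnorm (E *\<^sub>v x)) * vnorm x"
    by (metis cx mult.assoc mult.commute mult_1_right)
  also have "\<dots> \<le> op_norm E * vnorm x" by (rule mult_right_mono[OF a vnorm_nonneg])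
  finally show ?thesis .
qed

lemma op_norm_nonneg:
  assumes E: "(E::real mat) \<in> carrier_mat m p" and p: "0 < p"
  shows "op_norm E \<ge> 0"
proof -
  define x :: "real vec" where "x = unit_vec p 0"
  have x: "x \<in> carrier_vec p" "vnorm x = 1" unfolding x_def vnorm_def using p by auto
  have "vnorm (E *\<^sub>v x) \<le> op_norm E" unfolding op_norm_def
    by (rule cSup_upper[OF _ op_norm_bdd[OF E]], insert x E, auto)
  then show ?thesis using vnorm_nonneg order_trans by blast
qed

lemma dot_abs_le:
  assumes x: "x \<in> carrier_vec n" and y: "y \<in> carrier_vec n"
  shows "\<bar>x \<bullet> y\<bar> \<le> vnorm x * vnorm (y::real vec)"
proof -
  have "(x \<bullet> y)\<^sup>2 \<le> (vnorm x * vnorm y)\<^sup>2"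
    using cauchy_schwarz[OF x y] by (simp add: power_mult_distrib vnorm_sq)
  then have "\<bar>x \<bullet> y\<bar>\<^sup>2 \<le> (vnorm x * vnorm y)\<^sup>2" by simp
  then show ?thesis by (rule power2_le_imp_le, intro mult_nonneg_nonneg vnorm_nonneg)
qed

lemma weyl_vec:
  assumes A: "(A::real mat) \<in> carrier_mat p p" and sA: "transpose_mat A = A"
    and B: "(B::real mat) \<in> carrier_mat p p" and sB: "transpose_mat B = B"
    and u: "orthset p {..<p} u" and eu: "\<And>k. k < p \<Longrightarrow> A *\<^sub>v u k = \<alpha> k \<cdot>\<^sub>v u k"
    and w: "orthset p {..<p} w" and ew: "\<And>k. k < p \<Longrightarrow> B *\<^sub>v w k = \<beta> k \<cdot>\<^sub>v w k"
    and sa: "\<And>i j. i \<le> j \<Longrightarrow> j < p \<Longrightarrow> \<alpha> j \<le> \<alpha> i"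
    and sb: "\<And>i j. i \<le> j \<Longrightarrow> j < p \<Longrightarrow> \<beta> j \<le> \<beta> i"
    and j: "j < p"
  shows "\<exists>x\<in>carrier_vec p. x \<noteq> 0\<^sub>v p \<and> x \<bullet> (A *\<^sub>v x) \<le> \<alpha> j * (x \<bullet> x) \<and> \<beta> j * (x \<bullet> x) \<le> x \<bullet> (B *\<^sub>v x)"
proof -
  have uc: "\<And>k. k < p \<Longrightarrow> u k \<in> carrier_vec p" using u orthsetD by blast
  have wc: "\<And>k. k < p \<Longrightarrow> w k \<in> carrier_vec p" using w orthsetD by blast
  define F where "F = u ` {..<j} \<union> w ` {Suc j..<p}"
  have Ff: "finite F" unfolding F_def by auto
  have Fc: "F \<subseteq> carrier_vec p" unfolding F_def using uc wc j by auto
  have "card F \<le> card (u ` {..<j}) + card (w ` {Suc j..<p})" unfolding F_def by (rule card_Un_le)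
  also have "\<dots> \<le> j + (p - Suc j)" using card_image_le[of "{..<j}" u] card_image_le[of "{Suc j..<p}" w] by auto
  finally have cF: "card F < p" using j by auto
  obtain x where x: "x \<in> carrier_vec p" "x \<noteq> 0\<^sub>v p" "\<forall>v\<in>F. v \<bullet> x = 0"
    using kernel_exists[OF Ff Fc cF] by blast
  have ux: "\<And>k. k < j \<Longrightarrow> u k \<bullet> x = 0" using x(3) unfolding F_def by auto
  have wx: "\<And>k. j < k \<Longrightarrow> k < p \<Longrightarrow> w k \<bullet> x = 0" using x(3) unfolding F_def by auto
  have "x \<bullet> (A *\<^sub>v x) = (\<Sum>k<p. \<alpha> k * (u k \<bullet> x)\<^sup>2)" by (rule quad_form[OF A sA u eu x(1)])
  also have "\<dots> \<le> (\<Sum>k<p. \<alpha> j * (u k \<bullet> x)\<^sup>2)"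
  proof (intro sum_mono)
    fix k assume k: "k \<in> {..<p}"
    show "\<alpha> k * (u k \<bullet> x)\<^sup>2 \<le> \<alpha> j * (u k \<bullet> x)\<^sup>2"
    proof (cases "k < j")
      case True then show ?thesis using ux by simp
    next
      case False then show ?thesis using sa[of j k] k by (auto intro: mult_right_mono)
    qed
  qed
  also have "\<dots> = \<alpha> j * (x \<bullet> x)" using onb_norm[OF u x(1)] by (simp add: sum_distrib_left)
  finally have 1: "x \<bullet> (A *\<^sub>v x) \<le> \<alpha> j * (x \<bullet> x)" .
  have "\<beta> j * (x \<bullet> x) = (\<Sum>k<p. \<beta> j * (w k \<bullet> x)\<^sup>2)" using onb_norm[OF w x(1)] by (simp add: sum_distrib_left)
  also have "\<dots> \<le> (\<Sum>k<p. \<beta> k * (w k \<bullet> x)\<^sup>2)"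
  proof (intro sum_mono)
    fix k assume k: "k \<in> {..<p}"
    show "\<beta> j * (w k \<bullet> x)\<^sup>2 \<le> \<beta> k * (w k \<bullet> x)\<^sup>2"
    proof (cases "j < k")
      case True then show ?thesis using wx k by simp
    next
      case False then show ?thesis using sb[of k j] j by (auto intro: mult_right_mono)
    qed
  qed
  also have "\<dots> = x \<bullet> (B *\<^sub>v x)" by (rule quad_form[OF B sB w ew x(1), symmetric])
  finally show ?thesis using 1 x by blast
qed

lemma weyl:
  assumes A: "(A::real mat) \<in> carrier_mat p p" and sA: "transpose_mat A = A"
    and B: "(B::real mat) \<in> carrier_mat p p" and sB: "transpose_mat B = B"
    and u: "orthset p {..<p} u" and eu: "\<And>k. k < p \<Longrightarrow> A *\<^sub>v u k = \<alpha> k \<cdot>\<^sub>v u k"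
    and w: "orthset p {..<p} w" and ew: "\<And>k. k < p \<Longrightarrow> B *\<^sub>v w k = \<beta> k \<cdot>\<^sub>v w k"
    and sa: "\<And>i j. i \<le> j \<Longrightarrow> j < p \<Longrightarrow> \<alpha> j \<le> \<alpha> i"
    and sb: "\<And>i j. i \<le> j \<Longrightarrow> j < p \<Longrightarrow> \<beta> j \<le> \<beta> i"
    and j: "j < p"
  shows "\<bar>\<beta> j - \<alpha> j\<bar> \<le> op_norm (B - A)"
proof -
  have key: "\<And>x::real vec. x \<in> carrier_vec p \<Longrightarrow> \<bar>x \<bullet> (B *\<^sub>v x) - x \<bullet> (A *\<^sub>v x)\<bar> \<le> op_norm (B - A) * (x \<bullet> x)"
  proof -
    fix x :: "real vec" assume x: "x \<in> carrier_vec p"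
    have "x \<bullet> (B *\<^sub>v x) - x \<bullet> (A *\<^sub>v x) = x \<bullet> ((B - A) *\<^sub>v x)"
      using A B x by (simp add: minus_mult_distrib_mat_vec scalar_prod_minus_distrib[of _ p])
    also have "\<bar>\<dots>\<bar> \<le> vnorm x * vnorm ((B - A) *\<^sub>v x)" by (rule dot_abs_le[of _ p], insert x A B, auto intro!: mat_vec_carrier[of _ p p])
    also have "\<dots> \<le> vnorm x * (op_norm (B - A) * vnorm x)"
      by (rule mult_left_mono[OF op_norm_bound[of _ p p] vnorm_nonneg], insert A B x, auto)
    also have "\<dots> = op_norm (B - A) * (x \<bullet> x)" using vnorm_sq[of x] by (simp add: power2_eq_square)
    finally show "\<bar>x \<bullet> (B *\<^sub>v x) - x \<bullet> (A *\<^sub>v x)\<bar> \<le> op_norm (B - A) * (x \<bullet> x)" .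
  qed
  obtain x where x: "x \<in> carrier_vec p" "x \<noteq> 0\<^sub>v p" "x \<bullet> (A *\<^sub>v x) \<le> \<alpha> j * (x \<bullet> x)" "\<beta> j * (x \<bullet> x) \<le> x \<bullet> (B *\<^sub>v x)"
    using weyl_vec[OF A sA B sB u eu w ew sa sb j] by blast
  obtain y where y: "y \<in> carrier_vec p" "y \<noteq> 0\<^sub>v p" "y \<bullet> (B *\<^sub>v y) \<le> \<beta> j * (y \<bullet> y)" "\<alpha> j * (y \<bullet> y) \<le> y \<bullet> (A *\<^sub>v y)"
    using weyl_vec[OF B sB A sA w ew u eu sb sa j] by blast
  have px: "x \<bullet> x > 0" using dot_self_pos[OF x(1,2)] .
  have py: "y \<bullet> y > 0" using dot_self_pos[OF y(1,2)] .
  have "(\<beta> j - \<alpha> j) * (x \<bullet> x) \<le> op_norm (B - A) * (x \<bullet> x)" using key[OF x(1)] x(3,4)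
    unfolding left_diff_distrib abs_le_iff by linarith
  then have 1: "\<beta> j - \<alpha> j \<le> op_norm (B - A)" using px by simp
  have "(\<alpha> j - \<beta> j) * (y \<bullet> y) \<le> op_norm (B - A) * (y \<bullet> y)" using key[OF y(1)] y(3,4)
    unfolding left_diff_distrib abs_le_iff by linarith
  then have 2: "\<alpha> j - \<beta> j \<le> op_norm (B - A)" using py by simp
  show ?thesis using 1 2 by linarith
qed

lemma hoffman_wielandt:
  assumes A: "(A::real mat) \<in> carrier_mat p p" and sA: "transpose_mat A = A"
    and B: "(B::real mat) \<in> carrier_mat p p" and sB: "transpose_mat B = B"
    and u: "orthset p {..<p} u" and eu: "\<And>k. k < p \<Longrightarrow> A *\<^sub>v u k = \<alpha> k \<cdot>\<^sub>v u k"
    and w: "orthset p {..<p} w" and ew: "\<And>k. k < p \<Longrightarrow> B *\<^sub>v w k = \<beta> k \<cdot>\<^sub>v w k"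
    and sa: "\<And>i j. i \<le> j \<Longrightarrow> j < p \<Longrightarrow> \<alpha> j \<le> \<alpha> i"
    and sb: "\<And>i j. i \<le> j \<Longrightarrow> j < p \<Longrightarrow> \<beta> j \<le> \<beta> i"
  shows "(\<Sum>k<p. (\<beta> k - \<alpha> k)\<^sup>2) \<le> fsq (B - A)"
proof -
  have uc: "\<And>k. k < p \<Longrightarrow> u k \<in> carrier_vec p" using u orthsetD by blast
  have wc: "\<And>k. k < p \<Longrightarrow> w k \<in> carrier_vec p" using w orthsetD by blast
  define E where "E = B - A"
  have E: "E \<in> carrier_mat p p" unfolding E_def using A B by auto
  define W where "W = (\<lambda>i k. (w i \<bullet> u k)\<^sup>2)"
  have entry: "\<And>i k. i < p \<Longrightarrow> k < p \<Longrightarrow> w i \<bullet> (E *\<^sub>v u k) = (\<beta> i - \<alpha> k) * (w i \<bullet> u k)"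
  proof -
    fix i k assume ik: "i < p" "k < p"
    have "w i \<bullet> (E *\<^sub>v u k) = w i \<bullet> (B *\<^sub>v u k) - w i \<bullet> (A *\<^sub>v u k)"
      unfolding E_def using A B uc[OF ik(2)] wc[OF ik(1)]
      by (simp add: minus_mult_distrib_mat_vec scalar_prod_minus_distrib[of _ p])
    also have "w i \<bullet> (B *\<^sub>v u k) = (B *\<^sub>v w i) \<bullet> u k" using sym_dot[OF B sB wc[OF ik(1)] uc[OF ik(2)]] by simp
    also have "\<dots> = \<beta> i * (w i \<bullet> u k)" using ew[OF ik(1)] wc[OF ik(1)] uc[OF ik(2)] by simp
    also have "A *\<^sub>v u k = \<alpha> k \<cdot>\<^sub>v u k" by (rule eu[OF ik(2)])
    also have "w i \<bullet> (\<alpha> k \<cdot>\<^sub>v u k) = \<alpha> k * (w i \<bullet> u k)" using wc[OF ik(1)] uc[OF ik(2)] by simp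
    finally show "w i \<bullet> (E *\<^sub>v u k) = (\<beta> i - \<alpha> k) * (w i \<bullet> u k)" by (simp add: algebra_simps)
  qed
  have "fsq E = (\<Sum>k<p. (E *\<^sub>v u k) \<bullet> (E *\<^sub>v u k))" by (rule fsq_onb[OF E u])
  also have "\<dots> = (\<Sum>k<p. \<Sum>i<p. (w i \<bullet> (E *\<^sub>v u k))\<^sup>2)"
    by (intro sum.cong refl, subst onb_norm[OF w], insert E, auto)
  also have "\<dots> = (\<Sum>i<p. \<Sum>k<p. W i k * (\<beta> i - \<alpha> k)\<^sup>2)"
    by (subst sum.swap, intro sum.cong refl, subst entry, auto simp: W_def power_mult_distrib)
  finally have fE: "fsq E = (\<Sum>i<p. \<Sum>k<p. W i k * (\<beta> i - \<alpha> k)\<^sup>2)" .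
  have row: "\<And>i. i < p \<Longrightarrow> (\<Sum>k<p. W i k) = 1"
  proof -
    fix i assume i: "i < p"
    have "(\<Sum>k<p. W i k) = (\<Sum>k<p. (u k \<bullet> w i)\<^sup>2)" unfolding W_def
      by (intro sum.cong refl, subst comm_scalar_prod[of _ p], insert uc wc i, auto)
    also have "\<dots> = w i \<bullet> w i" using onb_norm[OF u wc[OF i]] by simp
    also have "\<dots> = 1" using orthsetD(2)[OF w, of i i] i by simp
    finally show "(\<Sum>k<p. W i k) = 1" .
  qed
  have col: "\<And>k. k < p \<Longrightarrow> (\<Sum>i<p. W i k) = 1"
  proof -
    fix k assume k: "k < p"
    have "(\<Sum>i<p. W i k) = u k \<bullet> u k" unfolding W_def using onb_norm[OF w uc[OF k]] by simp
    also have "\<dots> = 1" using orthsetD(2)[OF u, of k k] k by simp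
    finally show "(\<Sum>i<p. W i k) = 1" .
  qed
  have W0: "\<And>i k. i < p \<Longrightarrow> k < p \<Longrightarrow> 0 \<le> W i k" unfolding W_def by simp
  have R: "(\<Sum>i<p. \<Sum>k<p. W i k * \<beta> i * \<alpha> k) \<le> (\<Sum>i<p. \<beta> i * \<alpha> i)"
    by (rule ds_rearr[OF sb sa W0 row col])
  have "(\<Sum>i<p. \<Sum>k<p. W i k * (\<beta> i - \<alpha> k)\<^sup>2)
      = (\<Sum>i<p. \<Sum>k<p. W i k * (\<beta> i)\<^sup>2) + (\<Sum>i<p. \<Sum>k<p. W i k * (\<alpha> k)\<^sup>2)
        - 2 * (\<Sum>i<p. \<Sum>k<p. W i k * \<beta> i * \<alpha> k)"
  proof -
    have pw: "\<And>i k. W i k * (\<beta> i - \<alpha> k)\<^sup>2 = W i k * (\<beta> i)\<^sup>2 + W i k * (\<alpha> k)\<^sup>2 - 2 * (W i k * \<beta> i * \<alpha> k)"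
      by (simp add: power2_diff algebra_simps)
    show ?thesis unfolding pw sum.distrib sum_subtractf sum_distrib_left[symmetric] ..
  qed
  also have "(\<Sum>i<p. \<Sum>k<p. W i k * (\<beta> i)\<^sup>2) = (\<Sum>i<p. (\<beta> i)\<^sup>2)"
    by (intro sum.cong refl, simp add: sum_distrib_right[symmetric] row)
  also have "(\<Sum>i<p. \<Sum>k<p. W i k * (\<alpha> k)\<^sup>2) = (\<Sum>k<p. (\<alpha> k)\<^sup>2)"
    by (subst sum.swap, intro sum.cong refl, simp add: sum_distrib_right[symmetric] col)
  finally have "fsq E \<ge> (\<Sum>i<p. (\<beta> i)\<^sup>2) + (\<Sum>k<p. (\<alpha> k)\<^sup>2) - 2 * (\<Sum>i<p. \<beta> i * \<alpha> i)"
    using fE R by linarith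
  moreover have "(\<Sum>k<p. (\<beta> k - \<alpha> k)\<^sup>2) = (\<Sum>i<p. (\<beta> i)\<^sup>2) + (\<Sum>k<p. (\<alpha> k)\<^sup>2) - 2 * (\<Sum>i<p. \<beta> i * \<alpha> i)"
  proof -
    have pw: "\<And>k. (\<beta> k - \<alpha> k)\<^sup>2 = (\<beta> k)\<^sup>2 + (\<alpha> k)\<^sup>2 - 2 * (\<beta> k * \<alpha> k)"
      by (simp add: power2_diff algebra_simps)
    show ?thesis unfolding pw sum.distrib sum_subtractf sum_distrib_left[symmetric] ..
  qed
  ultimately show ?thesis unfolding E_def by linarith
qed

lemma gram_sym:
  assumes M: "(M::real mat) \<in> carrier_mat m d"
  shows "transpose_mat (transpose_mat M * M) = transpose_mat M * M"
  using transpose_mult[of "transpose_mat M" d m M d] M by auto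

lemma gram_carrier: "(M::real mat) \<in> carrier_mat m d \<Longrightarrow> transpose_mat M * M \<in> carrier_mat d d"
  by auto

lemma gram_quad:
  assumes M: "(M::real mat) \<in> carrier_mat m d" and x: "x \<in> carrier_vec d"
  shows "x \<bullet> ((transpose_mat M * M) *\<^sub>v x) = (M *\<^sub>v x) \<bullet> (M *\<^sub>v x)"
proof -
  have "(transpose_mat M * M) *\<^sub>v x = transpose_mat M *\<^sub>v (M *\<^sub>v x)"
    by (rule assoc_mult_mat_vec[of _ d m], insert M x, auto)
  moreover have c: "transpose_mat M *\<^sub>v (M *\<^sub>v x) \<in> carrier_vec d" using M by (intro mat_vec_carrier[of _ d m], auto)
  ultimately have "x \<bullet> ((transpose_mat M * M) *\<^sub>v x) = (transpose_mat M *\<^sub>v (M *\<^sub>v x)) \<bullet> x"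
    using comm_scalar_prod[OF x c] by simp
  also have "\<dots> = (M *\<^sub>v x) \<bullet> (M *\<^sub>v x)" by (rule transpose_vec_mult_scalar[OF M x], insert M, auto)
  finally show ?thesis .
qed

lemma gram_spectral:
  assumes M: "(M::real mat) \<in> carrier_mat m d"
  shows "\<exists>w \<nu>. orthset d {..<d} w \<and> (\<forall>i<d. (transpose_mat M * M) *\<^sub>v w i = \<nu> i \<cdot>\<^sub>v w i)
     \<and> (\<forall>i<d. \<nu> i = (M *\<^sub>v w i) \<bullet> (M *\<^sub>v w i))
     \<and> (\<forall>i<d. \<forall>k<d. (M *\<^sub>v w i) \<bullet> (M *\<^sub>v w k) = (if i = k then \<nu> i else 0))
     \<and> (\<Sum>i<d. \<nu> i) = fsq M"
proof -
  let ?N = "transpose_mat M * M"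
  obtain w \<nu> where w: "orthset d {..<d} w" "\<forall>i<d. ?N *\<^sub>v w i = \<nu> i \<cdot>\<^sub>v w i"
    using spectral[OF gram_carrier[OF M] gram_sym[OF M]] by blast
  have wc: "\<And>k. k < d \<Longrightarrow> w k \<in> carrier_vec d" using w(1) orthsetD by blast
  have ip: "\<And>i k. i < d \<Longrightarrow> k < d \<Longrightarrow> (M *\<^sub>v w i) \<bullet> (M *\<^sub>v w k) = (if i = k then \<nu> i else 0)"
  proof -
    fix i k assume ik: "i < d" "k < d"
    have "(M *\<^sub>v w i) \<bullet> (M *\<^sub>v w k) = (transpose_mat M *\<^sub>v (M *\<^sub>v w i)) \<bullet> w k"
      by (rule transpose_vec_mult_scalar[OF M wc[OF ik(2)], symmetric], insert M, auto)
    also have "transpose_mat M *\<^sub>v (M *\<^sub>v w i) = ?N *\<^sub>v w i"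
      by (rule assoc_mult_mat_vec[symmetric, of _ d m], insert M wc ik, auto)
    also have "\<dots> = \<nu> i \<cdot>\<^sub>v w i" using w(2) ik by auto
    also have "(\<nu> i \<cdot>\<^sub>v w i) \<bullet> w k = \<nu> i * (w i \<bullet> w k)"
      using smult_scalar_prod_distrib[OF wc[OF ik(1)] wc[OF ik(2)]] by simp
    also have "\<dots> = (if i = k then \<nu> i else 0)" using orthsetD(2)[OF w(1), of i k] ik by simp
    finally show "(M *\<^sub>v w i) \<bullet> (M *\<^sub>v w k) = (if i = k then \<nu> i else 0)" .
  qed
  have nu: "\<forall>i<d. \<nu> i = (M *\<^sub>v w i) \<bullet> (M *\<^sub>v w i)" using ip by simp
  have "(\<Sum>i<d. \<nu> i) = fsq M" using fsq_onb[OF M w(1)] nu by simp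
  then show ?thesis using w ip nu by blast
qed

lemma mset_sum_eq:
  assumes "mset xs = mset ys" shows "sum_list (xs::real list) = sum_list ys"
  by (metis assms sum_mset_sum_list)

lemma sing_vals:
  assumes M: "(M::real mat) \<in> carrier_mat d d"
    and contr: "\<And>x. x \<in> carrier_vec d \<Longrightarrow> (M *\<^sub>v x) \<bullet> (M *\<^sub>v x) \<le> x \<bullet> x"
  defines "\<sigma> \<equiv> singular_values M"
  shows "(\<forall>i<d. 0 \<le> \<sigma> i \<and> \<sigma> i \<le> 1) \<and> (\<Sum>i<d. (\<sigma> i)\<^sup>2) = fsq M"
proof -
  let ?N = "transpose_mat M * M"
  obtain w \<nu> where w: "orthset d {..<d} w" "\<forall>i<d. ?N *\<^sub>v w i = \<nu> i \<cdot>\<^sub>v w i"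
    "\<forall>i<d. \<nu> i = (M *\<^sub>v w i) \<bullet> (M *\<^sub>v w i)" "(\<Sum>i<d. \<nu> i) = fsq M"
    using gram_spectral[OF M] by blast
  have wc: "\<And>k. k < d \<Longrightarrow> w k \<in> carrier_vec d" using w(1) orthsetD by blast
  have nu0: "\<And>i. i < d \<Longrightarrow> 0 \<le> \<nu> i" using w(3) dot_self_ge0 by simp
  have nu1: "\<And>i. i < d \<Longrightarrow> \<nu> i \<le> 1"
  proof -
    fix i assume i: "i < d"
    have "\<nu> i = (M *\<^sub>v w i) \<bullet> (M *\<^sub>v w i)" using w(3) i by auto
    also have "\<dots> \<le> w i \<bullet> w i" by (rule contr[OF wc[OF i]])
    also have "\<dots> = 1" using orthsetD(2)[OF w(1), of i i] i by simp
    finally show "\<nu> i \<le> 1" .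
  qed
  have cpN: "char_poly ?N = prod_list (map (\<lambda>x. [:-x, 1:]) (map \<nu> [0..<d]))"
    using eig_charpoly[OF w(1) gram_carrier[OF M]] w(2) by blast
  define P where "P = (\<lambda>\<sigma>::nat \<Rightarrow> real.
     (\<forall>i j. i \<le> j \<longrightarrow> j < dim_col M \<longrightarrow> \<sigma> j \<le> \<sigma> i) \<and>
     (\<forall>i < dim_col M. 0 \<le> \<sigma> i) \<and>
     char_poly (transpose_mat M * M) = (\<Prod>i<dim_col M. [:- ((\<sigma> i)\<^sup>2), 1:]))"
  have dc: "dim_col M = d" using M by auto
  define xs where "xs = rev (sort (map \<nu> [0..<d]))"
  have lxs: "length xs = d" unfolding xs_def by simp
  have mxs: "mset xs = mset (map \<nu> [0..<d])" unfolding xs_def by simp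
  have xs0: "\<And>i. i < d \<Longrightarrow> 0 \<le> xs ! i"
  proof -
    fix i assume "i < d"
    then have "xs ! i \<in> set xs" using lxs by auto
    then have "xs ! i \<in> set (map \<nu> [0..<d])" using mxs by (metis set_mset_mset)
    then obtain k where "k < d" "xs ! i = \<nu> k" by auto
    then show "0 \<le> xs ! i" using nu0 by simp
  qed
  define \<tau> where "\<tau> = (\<lambda>i. sqrt (xs ! i))"
  have "P \<tau>"
    unfolding P_def dc
  proof (intro conjI allI impI)
    fix i j assume ij: "i \<le> j" "j < d"
    have "xs ! j \<le> xs ! i" unfolding xs_def
      using sorted_nth_mono[OF sorted_sort, of "d - Suc j" "d - Suc i" "map \<nu> [0..<d]"] ij
      by (simp add: rev_nth)
    then show "\<tau> j \<le> \<tau> i" unfolding \<tau>_def by simp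
  next
    fix i assume "i < d" then show "0 \<le> \<tau> i" unfolding \<tau>_def using xs0 by simp
  next
    have "(\<Prod>i<d. [:- ((\<tau> i)\<^sup>2), 1:]) = (\<Prod>i<d. [:- (xs ! i), 1:])"
      unfolding \<tau>_def using xs0 by (intro prod.cong refl, simp)
    also have "\<dots> = prod_list (map (\<lambda>i. [:- (xs ! i), 1:]) [0..<d])"
      by (subst prod.distinct_set_conv_list[symmetric], auto simp: atLeast0LessThan)
    also have "map (\<lambda>i. [:- (xs ! i), 1:]) [0..<d] = map (\<lambda>x. [:-x, 1:]) xs"
      by (rule nth_equalityI, auto simp: lxs)
    also have "prod_list (map (\<lambda>x. [:-x, 1:]) xs) = prod_mset (mset (map (\<lambda>x. [:-x, 1::real:]) xs))"
      by (simp only: prod_mset_prod_list)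
    also have "mset (map (\<lambda>x. [:-x, 1::real:]) xs) = mset (map (\<lambda>x. [:-x, 1:]) (map \<nu> [0..<d]))"
      by (simp only: mset_map mxs)
    also have "prod_mset (mset (map (\<lambda>x. [:-x, 1::real:]) (map \<nu> [0..<d]))) = prod_list (map (\<lambda>x. [:-x, 1:]) (map \<nu> [0..<d]))"
      by (simp only: prod_mset_prod_list)
    finally show "char_poly ?N = (\<Prod>i<d. [:- ((\<tau> i)\<^sup>2), 1:])" using cpN by simp
  qed
  then have Ps: "P \<sigma>" unfolding \<sigma>_def singular_values_def P_def[symmetric] by (rule someI[of P \<tau>])
  then have sig0: "\<forall>i<d. 0 \<le> \<sigma> i" unfolding P_def dc by blast
  from Ps have cps: "char_poly ?N = (\<Prod>i<d. [:- ((\<sigma> i)\<^sup>2), 1:])" unfolding P_def dc by blast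
  have "(\<Prod>i<d. [:- ((\<sigma> i)\<^sup>2), 1:]) = prod_list (map (\<lambda>i. [:- ((\<sigma> i)\<^sup>2), 1:]) [0..<d])"
    by (subst prod.distinct_set_conv_list[symmetric], auto simp: atLeast0LessThan)
  also have "\<dots> = prod_list (map (\<lambda>x. [:-x, 1:]) (map (\<lambda>i. (\<sigma> i)\<^sup>2) [0..<d]))"
    by (simp only: map_map comp_def)
  finally have "char_poly ?N = prod_list (map (\<lambda>x. [:-x, 1:]) (map (\<lambda>i. (\<sigma> i)\<^sup>2) [0..<d]))"
    using cps by simp
  then have ms: "mset (map (\<lambda>i. (\<sigma> i)\<^sup>2) [0..<d]) = mset (map \<nu> [0..<d])"
    using cpN mset_charpoly by metis
  have "(\<Sum>i<d. (\<sigma> i)\<^sup>2) = sum_list (map (\<lambda>i. (\<sigma> i)\<^sup>2) [0..<d])"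
    by (subst sum.distinct_set_conv_list[symmetric], auto simp: atLeast0LessThan)
  also have "\<dots> = sum_list (map \<nu> [0..<d])" by (rule mset_sum_eq[OF ms])
  also have "\<dots> = (\<Sum>i<d. \<nu> i)"
    by (subst sum.distinct_set_conv_list[symmetric], auto simp: atLeast0LessThan)
  finally have ssum: "(\<Sum>i<d. (\<sigma> i)\<^sup>2) = fsq M" using w(4) by simp
  have "\<forall>i<d. \<sigma> i \<le> 1"
  proof (intro allI impI)
    fix i assume i: "i < d"
    have "(\<sigma> i)\<^sup>2 \<in> set (map (\<lambda>i. (\<sigma> i)\<^sup>2) [0..<d])" using i by auto
    then have "(\<sigma> i)\<^sup>2 \<in> set (map \<nu> [0..<d])" using ms by (metis set_mset_mset)
    then have "(\<sigma> i)\<^sup>2 \<le> 1" using nu1 by auto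
    then show "\<sigma> i \<le> 1" using power2_le_imp_le[of "\<sigma> i" 1] by simp
  qed
  then show ?thesis using sig0 ssum by auto
qed

lemma fsq_sin_theta:
  assumes Vh: "(Vh::real mat) \<in> carrier_mat p d" and V: "(V::real mat) \<in> carrier_mat p d"
    and contr: "\<And>x. x \<in> carrier_vec d \<Longrightarrow> ((transpose_mat Vh * V) *\<^sub>v x) \<bullet> ((transpose_mat Vh * V) *\<^sub>v x) \<le> x \<bullet> x"
  shows "fsq (sin_theta Vh V) = real d - fsq (transpose_mat Vh * V)"
proof -
  define M where "M = transpose_mat Vh * V"
  have M: "M \<in> carrier_mat d d" unfolding M_def using Vh V by auto
  define \<sigma> where "\<sigma> = singular_values M"
  have s: "\<forall>i<d. 0 \<le> \<sigma> i \<and> \<sigma> i \<le> 1" "(\<Sum>i<d. (\<sigma> i)\<^sup>2) = fsq M"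
    using sing_vals[OF M contr[folded M_def]] unfolding \<sigma>_def by auto
  have st: "sin_theta Vh V = mat d d (\<lambda>(i,j). if i = j then sin (arccos (\<sigma> i)) else 0)"
    unfolding sin_theta_def Let_def M_def[symmetric] \<sigma>_def using M by auto
  have "fsq (sin_theta Vh V) = (\<Sum>i<d. \<Sum>j<d. (if i = j then sin (arccos (\<sigma> i)) else 0)\<^sup>2)"
    unfolding st fsq_def by (intro sum.cong refl, auto)
  also have "\<dots> = (\<Sum>i<d. (sin (arccos (\<sigma> i)))\<^sup>2)"
  proof (intro sum.cong refl)
    fix i assume "i \<in> {..<d}"
    have "(\<Sum>j<d. (if i = j then sin (arccos (\<sigma> i)) else 0)\<^sup>2) = (\<Sum>j<d. if j = i then (sin (arccos (\<sigma> i)))\<^sup>2 else 0)"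
      by (intro sum.cong refl, auto)
    also have "\<dots> = (sin (arccos (\<sigma> i)))\<^sup>2" using \<open>i \<in> {..<d}\<close> by simp
    finally show "(\<Sum>j<d. (if i = j then sin (arccos (\<sigma> i)) else 0)\<^sup>2) = (sin (arccos (\<sigma> i)))\<^sup>2" .
  qed
  also have "\<dots> = (\<Sum>i<d. 1 - (\<sigma> i)\<^sup>2)"
  proof (intro sum.cong refl)
    fix i assume "i \<in> {..<d}"
    then have "0 \<le> \<sigma> i" "\<sigma> i \<le> 1" using s(1) by auto
    moreover then have "(\<sigma> i)\<^sup>2 \<le> 1" by (simp add: power_le_one)
    ultimately show "(sin (arccos (\<sigma> i)))\<^sup>2 = 1 - (\<sigma> i)\<^sup>2" by (simp add: sin_arccos)
  qed
  also have "\<dots> = real d - fsq M" using s(2) by (simp add: sum_subtractf)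
  finally show ?thesis unfolding M_def .
qed

lemma sum_prod_sums:
  fixes f g :: "nat \<Rightarrow> nat \<Rightarrow> real"
  shows "(\<Sum>a\<in>A. (\<Sum>i\<in>I. f i a) * (\<Sum>k\<in>K. g k a)) = (\<Sum>i\<in>I. \<Sum>k\<in>K. \<Sum>a\<in>A. f i a * g k a)"
proof -
  have "(\<Sum>a\<in>A. (\<Sum>i\<in>I. f i a) * (\<Sum>k\<in>K. g k a)) = (\<Sum>a\<in>A. \<Sum>i\<in>I. \<Sum>k\<in>K. f i a * g k a)"
    by (simp add: sum_product)
  also have "\<dots> = (\<Sum>i\<in>I. \<Sum>a\<in>A. \<Sum>k\<in>K. f i a * g k a)" by (rule sum.swap)
  also have "\<dots> = (\<Sum>i\<in>I. \<Sum>k\<in>K. \<Sum>a\<in>A. f i a * g k a)" by (rule sum.cong[OF refl], rule sum.swap)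
  finally show ?thesis .
qed

lemma polar_exists:
  assumes M: "(M::real mat) \<in> carrier_mat d d"
    and contr: "\<And>x. x \<in> carrier_vec d \<Longrightarrow> (M *\<^sub>v x) \<bullet> (M *\<^sub>v x) \<le> x \<bullet> x"
  shows "\<exists>Oq \<in> carrier_mat d d. transpose_mat Oq * Oq = 1\<^sub>m d \<and>
           fsq M \<le> (\<Sum>a<d. \<Sum>b<d. Oq $$ (a,b) * M $$ (a,b))"
proof -
  obtain w \<nu> where w: "orthset d {..<d} w"
    "\<forall>i<d. \<nu> i = (M *\<^sub>v w i) \<bullet> (M *\<^sub>v w i)"
    "\<forall>i<d. \<forall>k<d. (M *\<^sub>v w i) \<bullet> (M *\<^sub>v w k) = (if i = k then \<nu> i else 0)"
    "(\<Sum>i<d. \<nu> i) = fsq M"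
    using gram_spectral[OF M] by blast
  have wc: "\<And>k. k < d \<Longrightarrow> w k \<in> carrier_vec d" using w(1) orthsetD by blast
  have nu0: "\<And>i. i < d \<Longrightarrow> 0 \<le> \<nu> i" using w(2) dot_self_ge0 by simp
  have nu1: "\<And>i. i < d \<Longrightarrow> \<nu> i \<le> 1"
  proof -
    fix i assume i: "i < d"
    have "\<nu> i = (M *\<^sub>v w i) \<bullet> (M *\<^sub>v w i)" using w(2) i by auto
    also have "\<dots> \<le> w i \<bullet> w i" by (rule contr[OF wc[OF i]])
    also have "\<dots> = 1" using orthsetD(2)[OF w(1), of i i] i by simp
    finally show "\<nu> i \<le> 1" .
  qed
  define J where "J = {i. i < d \<and> 0 < \<nu> i}"
  define c where "c = (\<lambda>i. (1 / sqrt (\<nu> i)) \<cdot>\<^sub>v (M *\<^sub>v w i))"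
  have Mc: "\<And>i. M *\<^sub>v w i \<in> carrier_vec d" using M by auto
  have oc: "orthset d J c" unfolding orthset_def
  proof (intro conjI ballI)
    fix i assume "i \<in> J" then show "c i \<in> carrier_vec d" unfolding c_def using M by auto
  next
    fix i k assume ik: "i \<in> J" "k \<in> J"
    have "c i \<bullet> c k = (1 / sqrt (\<nu> i)) * ((1 / sqrt (\<nu> k)) * ((M *\<^sub>v w i) \<bullet> (M *\<^sub>v w k)))"
      unfolding c_def using Mc[of i] Mc[of k]
      by (simp add: smult_scalar_prod_distrib[of _ d] scalar_prod_smult_distrib[of _ d])
    also have "\<dots> = (if i = k then 1 else 0)" using w(3) ik unfolding J_def
      by (auto simp: field_simps)
    finally show "c i \<bullet> c k = (if i = k then 1 else 0)" .
  qed
  obtain c' where c': "orthset d {..<d} c'" "\<forall>i\<in>J. c' i = c i"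
    using orth_complete[OF oc] unfolding J_def by auto
  have c'c: "\<And>k. k < d \<Longrightarrow> c' k \<in> carrier_vec d" using c'(1) orthsetD by blast
  have q: "\<And>i. i < d \<Longrightarrow> M *\<^sub>v w i = sqrt (\<nu> i) \<cdot>\<^sub>v c' i"
  proof -
    fix i assume i: "i < d"
    show "M *\<^sub>v w i = sqrt (\<nu> i) \<cdot>\<^sub>v c' i"
    proof (cases "0 < \<nu> i")
      case True
      then have "c' i = c i" using c'(2) i unfolding J_def by auto
      then show ?thesis unfolding c_def using True by (simp add: smult_smult_assoc)
    next
      case False
      then have z: "\<nu> i = 0" using nu0[OF i] by simp
      have "M *\<^sub>v w i = 0\<^sub>v d"
      proof (rule ccontr)
        assume "M *\<^sub>v w i \<noteq> 0\<^sub>v d"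
        then have "(M *\<^sub>v w i) \<bullet> (M *\<^sub>v w i) > 0" using dot_self_pos[OF Mc] by blast
        then show False using w(2) i z by auto
      qed
      then show ?thesis using z c'c[OF i] by auto
    qed
  qed
  define Oq :: "real mat" where "Oq = mat d d (\<lambda>(a,b). \<Sum>i<d. c' i $ a * w i $ b)"
  have Oq: "Oq \<in> carrier_mat d d" unfolding Oq_def by auto
  have OO: "transpose_mat Oq * Oq = 1\<^sub>m d"
  proof (rule eq_matI)
    fix b b' assume bb: "b < dim_row (1\<^sub>m d :: real mat)" "b' < dim_col (1\<^sub>m d :: real mat)"
    then have bb': "b < d" "b' < d" by auto
    have "(transpose_mat Oq * Oq) $$ (b,b') = (\<Sum>a<d. Oq $$ (a,b) * Oq $$ (a,b'))"
      using bb' Oq by (simp add: scalar_prod_def atLeast0LessThan)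
    also have "\<dots> = (\<Sum>a<d. (\<Sum>i<d. c' i $ a * w i $ b) * (\<Sum>k<d. c' k $ a * w k $ b'))"
      using bb' by (intro sum.cong refl, simp add: Oq_def)
    also have "\<dots> = (\<Sum>i<d. \<Sum>k<d. \<Sum>a<d. (c' i $ a * w i $ b) * (c' k $ a * w k $ b'))"
      by (rule sum_prod_sums)
    also have "\<dots> = (\<Sum>i<d. \<Sum>k<d. w i $ b * w k $ b' * (c' i \<bullet> c' k))"
    proof (intro sum.cong refl)
      fix i k assume ik: "i \<in> {..<d}" "k \<in> {..<d}"
      have "c' i \<bullet> c' k = (\<Sum>a<d. c' i $ a * c' k $ a)" using dot_sum[OF c'c[of k]] ik by simp
      then show "(\<Sum>a<d. (c' i $ a * w i $ b) * (c' k $ a * w k $ b')) = w i $ b * w k $ b' * (c' i \<bullet> c' k)"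
        by (simp add: sum_distrib_left ac_simps)
    qed
    also have "\<dots> = (\<Sum>i<d. w i $ b * w i $ b')"
    proof (intro sum.cong refl)
      fix i assume i: "i \<in> {..<d}"
      have "(\<Sum>k<d. w i $ b * w k $ b' * (c' i \<bullet> c' k)) = (\<Sum>k<d. if k = i then w i $ b * w i $ b' else 0)"
        by (intro sum.cong refl, insert orthsetD(2)[OF c'(1)] i, auto)
      also have "\<dots> = w i $ b * w i $ b'" using i by simp
      finally show "(\<Sum>k<d. w i $ b * w k $ b' * (c' i \<bullet> c' k)) = w i $ b * w i $ b'" .
    qed
    also have "\<dots> = 1\<^sub>m d $$ (b,b')" using onb_dual[OF w(1) bb'] bb' by simp
    finally show "(transpose_mat Oq * Oq) $$ (b,b') = 1\<^sub>m d $$ (b,b')" .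
  qed (insert Oq, auto)
  have "(\<Sum>a<d. \<Sum>b<d. Oq $$ (a,b) * M $$ (a,b)) = (\<Sum>a<d. \<Sum>b<d. \<Sum>i<d. c' i $ a * w i $ b * M $$ (a,b))"
    by (intro sum.cong refl, simp add: Oq_def sum_distrib_right)
  also have "\<dots> = (\<Sum>a<d. \<Sum>i<d. \<Sum>b<d. c' i $ a * w i $ b * M $$ (a,b))"
    by (rule sum.cong[OF refl], rule sum.swap)
  also have "\<dots> = (\<Sum>i<d. \<Sum>a<d. \<Sum>b<d. c' i $ a * w i $ b * M $$ (a,b))"
    by (rule sum.swap)
  also have "\<dots> = (\<Sum>i<d. c' i \<bullet> (M *\<^sub>v w i))"
  proof (intro sum.cong refl)
    fix i assume i: "i \<in> {..<d}"
    have "c' i \<bullet> (M *\<^sub>v w i) = (\<Sum>a<d. c' i $ a * (M *\<^sub>v w i) $ a)" by (rule dot_sum[OF Mc])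
    also have "\<dots> = (\<Sum>a<d. c' i $ a * (\<Sum>b<d. M $$ (a,b) * w i $ b))"
    proof -
      have wi: "dim_vec (w i) = d" using wc i by auto
      show ?thesis using M wi by (intro sum.cong refl, auto simp: scalar_prod_def atLeast0LessThan)
    qed
    also have "\<dots> = (\<Sum>a<d. \<Sum>b<d. c' i $ a * w i $ b * M $$ (a,b))"
      by (simp add: sum_distrib_left ac_simps)
    finally show "(\<Sum>a<d. \<Sum>b<d. c' i $ a * w i $ b * M $$ (a,b)) = c' i \<bullet> (M *\<^sub>v w i)" by simp
  qed
  also have "\<dots> = (\<Sum>i<d. sqrt (\<nu> i))"
  proof (intro sum.cong refl)
    fix i assume i: "i \<in> {..<d}"
    have "c' i \<bullet> (M *\<^sub>v w i) = sqrt (\<nu> i) * (c' i \<bullet> c' i)"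
      using q[of i] i c'c[of i] by (simp add: scalar_prod_smult_distrib[of _ d])
    also have "\<dots> = sqrt (\<nu> i)" using orthsetD(2)[OF c'(1), of i i] i by simp
    finally show "c' i \<bullet> (M *\<^sub>v w i) = sqrt (\<nu> i)" .
  qed
  also have "\<dots> \<ge> (\<Sum>i<d. \<nu> i)"
  proof (intro sum_mono)
    fix i assume "i \<in> {..<d}"
    then have a: "0 \<le> \<nu> i" "\<nu> i \<le> 1" using nu0 nu1 by auto
    have "\<nu> i = sqrt (\<nu> i) * sqrt (\<nu> i)" using a by simp
    also have "\<dots> \<le> sqrt (\<nu> i) * 1" using a by (intro mult_left_mono, auto)
    finally show "\<nu> i \<le> sqrt (\<nu> i)" by simp
  qed
  finally show ?thesis using w(4) Oq OO by auto
qed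

lemma orth_cols_set:
  assumes V: "(V::real mat) \<in> carrier_mat p d" and on: "orthonormal_cols V"
  shows "orthset p {..<d} (col V)"
  unfolding orthset_def
proof (intro conjI ballI)
  fix i assume "i \<in> {..<d}" then show "col V i \<in> carrier_vec p" using V by auto
next
  fix i k assume ik: "i \<in> {..<d}" "k \<in> {..<d}"
  have "(transpose_mat V * V) $$ (i,k) = col V i \<bullet> col V k" using ik V by auto
  also have "transpose_mat V * V = 1\<^sub>m d" using on V unfolding orthonormal_cols_def by auto
  finally show "col V i \<bullet> col V k = (if i = k then 1 else 0)" using ik by auto
qed

lemma isometry:
  assumes V: "(V::real mat) \<in> carrier_mat p d" and on: "orthonormal_cols V" and x: "x \<in> carrier_vec d"
  shows "(V *\<^sub>v x) \<bullet> (V *\<^sub>v x) = x \<bullet> x"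
proof -
  have VV: "transpose_mat V * V = 1\<^sub>m d" using on V unfolding orthonormal_cols_def by auto
  have "(V *\<^sub>v x) \<bullet> (V *\<^sub>v x) = (transpose_mat V *\<^sub>v (V *\<^sub>v x)) \<bullet> x"
    by (rule transpose_vec_mult_scalar[OF V x, symmetric], insert V, auto)
  also have "transpose_mat V *\<^sub>v (V *\<^sub>v x) = (transpose_mat V * V) *\<^sub>v x"
    by (rule assoc_mult_mat_vec[symmetric, of _ d p], insert V x, auto)
  also have "\<dots> = x" using VV x by auto
  finally show ?thesis .
qed

lemma coisometry_bessel:
  assumes V: "(V::real mat) \<in> carrier_mat p d" and on: "orthonormal_cols V" and y: "y \<in> carrier_vec p"
    and dp: "d \<le> p"
  shows "(transpose_mat V *\<^sub>v y) \<bullet> (transpose_mat V *\<^sub>v y) \<le> y \<bullet> y"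
proof -
  have "(transpose_mat V *\<^sub>v y) \<bullet> (transpose_mat V *\<^sub>v y) = (\<Sum>a<d. (col V a \<bullet> y)\<^sup>2)"
    by (subst dot_sq_sum[of _ d], insert V, auto intro!: mat_vec_carrier[of _ d p])
  also have "\<dots> \<le> y \<bullet> y" by (rule bessel[OF orth_cols_set[OF V on] _ y], insert dp, auto)
  finally show ?thesis .
qed

lemma contraction_M:
  assumes V: "(V::real mat) \<in> carrier_mat p d" and on: "orthonormal_cols V"
    and Vh: "(Vh::real mat) \<in> carrier_mat p d" and onh: "orthonormal_cols Vh"
    and x: "x \<in> carrier_vec d" and dp: "d \<le> p"
  shows "((transpose_mat Vh * V) *\<^sub>v x) \<bullet> ((transpose_mat Vh * V) *\<^sub>v x) \<le> x \<bullet> x"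
proof -
  have "(transpose_mat Vh * V) *\<^sub>v x = transpose_mat Vh *\<^sub>v (V *\<^sub>v x)"
    by (rule assoc_mult_mat_vec[of _ d p], insert V Vh x, auto)
  moreover have "(transpose_mat Vh *\<^sub>v (V *\<^sub>v x)) \<bullet> (transpose_mat Vh *\<^sub>v (V *\<^sub>v x)) \<le> (V *\<^sub>v x) \<bullet> (V *\<^sub>v x)"
    by (rule coisometry_bessel[OF Vh onh _ dp], insert V, auto)
  ultimately show ?thesis using isometry[OF V on x] by simp
qed

lemma fsq_cols: assumes X: "(X::real mat) \<in> carrier_mat p d"
  shows "fsq X = (\<Sum>b<d. col X b \<bullet> col X b)"
proof -
  have "fsq X = (\<Sum>i<p. \<Sum>b<d. (X $$ (i,b))\<^sup>2)" unfolding fsq_def using X by auto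
  also have "\<dots> = (\<Sum>b<d. \<Sum>i<p. (X $$ (i,b))\<^sup>2)" by (rule sum.swap)
  also have "\<dots> = (\<Sum>b<d. col X b \<bullet> col X b)"
    by (intro sum.cong refl, subst dot_sq_sum[of _ p], insert X, auto)
  finally show ?thesis .
qed

lemma sum_split_add: "(\<Sum>t<a + b. (f t::real)) = (\<Sum>t<a. f t) + (\<Sum>t<b. f (a + t :: nat))"
  by (induction b, auto)

lemma vec_sq_bound:
  assumes z: "(z::real vec) \<in> carrier_vec n" and a: "a \<in> carrier_vec n" and b: "b \<in> carrier_vec n"
    and eq: "\<And>i. i < n \<Longrightarrow> z $ i = b $ i - a $ i"
  shows "z \<bullet> z \<le> 2 * (a \<bullet> a) + 2 * (b \<bullet> b)"
proof -
  have "z \<bullet> z = (\<Sum>i<n. (b $ i - a $ i)\<^sup>2)" using dot_sq_sum[OF z] eq by simp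
  also have "\<dots> \<le> (\<Sum>i<n. 2 * (a $ i)\<^sup>2 + 2 * (b $ i)\<^sup>2)"
  proof (intro sum_mono)
    fix i
    have "0 \<le> (b $ i + a $ i)\<^sup>2" by simp
    then show "(b $ i - a $ i)\<^sup>2 \<le> 2 * (a $ i)\<^sup>2 + 2 * (b $ i)\<^sup>2" by (simp add: power2_diff power2_sum)
  qed
  also have "\<dots> = 2 * (a \<bullet> a) + 2 * (b \<bullet> b)"
    using dot_sq_sum[OF a] dot_sq_sum[OF b] by (simp add: sum.distrib sum_distrib_left)
  finally show ?thesis .
qed

lemma eig_orth:
  assumes A: "(A::real mat) \<in> carrier_mat n n" and s: "transpose_mat A = A"
    and x: "x \<in> carrier_vec n" and y: "y \<in> carrier_vec n"
    and ex: "A *\<^sub>v x = a \<cdot>\<^sub>v x" and ey: "A *\<^sub>v y = b \<cdot>\<^sub>v y" and ab: "a \<noteq> b"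
  shows "x \<bullet> y = 0"
proof -
  have "a * (x \<bullet> y) = (A *\<^sub>v x) \<bullet> y" using ex x y by simp
  also have "\<dots> = x \<bullet> (A *\<^sub>v y)" by (rule sym_dot[OF A s x y])
  also have "\<dots> = b * (x \<bullet> y)" using ey x y by simp
  finally have "(a - b) * (x \<bullet> y) = 0" by (simp add: algebra_simps)
  then show ?thesis using ab by simp
qed

definition oidx :: "nat \<Rightarrow> nat \<Rightarrow> nat \<Rightarrow> nat" where
  "oidx r d t = (if t < r - 1 then t else t + d)"

lemma oidx_lt: "r + d \<le> p + 1 \<Longrightarrow> 1 \<le> r \<Longrightarrow> t < p - d \<Longrightarrow> oidx r d t < p"
  unfolding oidx_def by auto

lemma oidx_inj: "t < p - d \<Longrightarrow> t' < p - d \<Longrightarrow> oidx r d t = oidx r d t' \<longleftrightarrow> t = t'"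
  unfolding oidx_def by auto

lemma mixed_parseval:
  assumes S: "(Sg::real mat) \<in> carrier_mat p p" and sS: "transpose_mat Sg = Sg"
    and V: "(V::real mat) \<in> carrier_mat p d" and on: "orthonormal_cols V"
    and Veig: "\<And>j. j < d \<Longrightarrow> Sg *\<^sub>v col V j = lam (j + r) \<cdot>\<^sub>v col V j"
    and u: "orthset p {..<p} u" and eu: "\<And>k. k < p \<Longrightarrow> Sg *\<^sub>v u k = lam (Suc k) \<cdot>\<^sub>v u k"
    and r: "1 \<le> r" "r + d \<le> p + 1"
    and sep: "\<And>t j. t < p - d \<Longrightarrow> j < d \<Longrightarrow> lam (oidx r d t + 1) \<noteq> lam (j + r)"
    and x: "x \<in> carrier_vec p"
  shows "x \<bullet> x = (\<Sum>l<d. (col V l \<bullet> x)\<^sup>2) + (\<Sum>t<p - d. (u (oidx r d t) \<bullet> x)\<^sup>2)"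
proof -
  have dp: "d \<le> p" using r by auto
  have uc: "\<And>k. k < p \<Longrightarrow> u k \<in> carrier_vec p" using u orthsetD by blast
  have vc: "\<And>k. k < d \<Longrightarrow> col V k \<in> carrier_vec p" using V by auto
  define q where "q = (\<lambda>t. if t < d then col V t else u (oidx r d (t - d)))"
  have vu: "\<And>j t. j < d \<Longrightarrow> t < p - d \<Longrightarrow> col V j \<bullet> u (oidx r d t) = 0"
  proof -
    fix j t assume jt: "j < d" "t < p - d"
    have o: "oidx r d t < p" using oidx_lt[OF r(2) r(1) jt(2)] .
    show "col V j \<bullet> u (oidx r d t) = 0"
      by (rule eig_orth[OF S sS vc[OF jt(1)] uc[OF o] Veig[OF jt(1)] eu[OF o]],
          insert sep[OF jt(2) jt(1)], auto)
  qed
  have oq: "orthset p {..<p} q" unfolding orthset_def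
  proof (intro conjI ballI)
    fix i assume i: "i \<in> {..<p}"
    show "q i \<in> carrier_vec p"
      using vc uc oidx_lt[OF r(2) r(1), of "i - d"] i dp unfolding q_def by auto
  next
    fix i k assume ik: "i \<in> {..<p}" "k \<in> {..<p}"
    show "q i \<bullet> q k = (if i = k then 1 else 0)"
    proof (cases "i < d")
      case True
      show ?thesis
      proof (cases "k < d")
        case True
        then show ?thesis using \<open>i < d\<close> orthsetD(2)[OF orth_cols_set[OF V on], of i k] unfolding q_def by auto
      next
        case False
        then show ?thesis using \<open>i < d\<close> vu[of i "k - d"] ik unfolding q_def by auto
      qed
    next
      case False
      then have i': "i - d < p - d" using ik by auto
      show ?thesis
      proof (cases "k < d")
        case True
        have "u (oidx r d (i - d)) \<bullet> col V k = col V k \<bullet> u (oidx r d (i - d))"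
          by (rule comm_scalar_prod[of _ p], insert uc oidx_lt[OF r(2) r(1) i'] vc True, auto)
        then show ?thesis using False True vu[OF True i'] unfolding q_def by auto
      next
        case False
        then have k': "k - d < p - d" using ik by auto
        have "u (oidx r d (i - d)) \<bullet> u (oidx r d (k - d)) = (if oidx r d (i - d) = oidx r d (k - d) then 1 else 0)"
          using orthsetD(2)[OF u] oidx_lt[OF r(2) r(1) i'] oidx_lt[OF r(2) r(1) k'] by auto
        also have "\<dots> = (if i = k then 1 else 0)" using oidx_inj[OF i' k'] \<open>\<not> i < d\<close> False by auto
        finally show ?thesis using \<open>\<not> i < d\<close> False unfolding q_def by auto
      qed
    qed
  qed
  have "x \<bullet> x = (\<Sum>t<p. (q t \<bullet> x)\<^sup>2)" by (rule onb_norm[OF oq x])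
  also have "\<dots> = (\<Sum>t<d + (p - d). (q t \<bullet> x)\<^sup>2)" using dp by simp
  also have "\<dots> = (\<Sum>t<d. (q t \<bullet> x)\<^sup>2) + (\<Sum>t<p - d. (q (d + t) \<bullet> x)\<^sup>2)" by (rule sum_split_add)
  also have "\<dots> = (\<Sum>l<d. (col V l \<bullet> x)\<^sup>2) + (\<Sum>t<p - d. (u (oidx r d t) \<bullet> x)\<^sup>2)"
    unfolding q_def by simp
  finally show ?thesis .
qed

lemma sq_le_of_abs_le: "\<bar>x::real\<bar> \<le> e \<Longrightarrow> x\<^sup>2 \<le> e\<^sup>2"
  by (metis abs_ge_zero power2_abs power_mono)

lemma main_bound:
  assumes S: "(Sg::real mat) \<in> carrier_mat p p" and sS: "transpose_mat Sg = Sg"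
    and Sh: "(Sgh::real mat) \<in> carrier_mat p p" and sSh: "transpose_mat Sgh = Sgh"
    and V: "(V::real mat) \<in> carrier_mat p d" and on: "orthonormal_cols V"
    and Vh: "(Vh::real mat) \<in> carrier_mat p d" and onh: "orthonormal_cols Vh"
    and Vheig: "\<And>j. j < d \<Longrightarrow> Sgh *\<^sub>v col Vh j = lamh (j + r) \<cdot>\<^sub>v col Vh j"
    and u: "orthset p {..<p} u" and eu: "\<And>k. k < p \<Longrightarrow> Sg *\<^sub>v u k = lam (Suc k) \<cdot>\<^sub>v u k"
    and uh: "orthset p {..<p} uh" and euh: "\<And>k. k < p \<Longrightarrow> Sgh *\<^sub>v uh k = lamh (Suc k) \<cdot>\<^sub>v uh k"
    and ls: "\<And>i j. 1 \<le> i \<Longrightarrow> i \<le> j \<Longrightarrow> j \<le> p \<Longrightarrow> lam j \<le> lam i"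
    and lhs: "\<And>i j. 1 \<le> i \<Longrightarrow> i \<le> j \<Longrightarrow> j \<le> p \<Longrightarrow> lamh j \<le> lamh i"
    and r: "1 \<le> r" "r + d \<le> p + 1"
    and sep: "\<And>t j. t < p - d \<Longrightarrow> j < d \<Longrightarrow> g \<le> \<bar>lam (oidx r d t + 1) - lam (j + r)\<bar>"
    and g: "0 < g"
  shows "g\<^sup>2 * (\<Sum>j<d. \<Sum>t<p - d. (u (oidx r d t) \<bullet> col Vh j)\<^sup>2)
          \<le> 4 * min (real d * (op_norm (Sgh - Sg))\<^sup>2) (fsq (Sgh - Sg))"
proof -
  define E where "E = Sgh - Sg"
  have E: "E \<in> carrier_mat p p" unfolding E_def using S Sh by auto
  define e where "e = op_norm E"
  define F where "F = fsq E"
  define m2 where "m2 = min (real d * e\<^sup>2) F"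
  have dp: "d \<le> p" using r by auto
  have uc: "\<And>k. k < p \<Longrightarrow> u k \<in> carrier_vec p" using u orthsetD by blast
  have vhc: "\<And>k. k < d \<Longrightarrow> col Vh k \<in> carrier_vec p" using Vh by auto
  have ohs: "orthset p {..<d} (col Vh)" by (rule orth_cols_set[OF Vh onh])
  have vh1: "\<And>j. j < d \<Longrightarrow> col Vh j \<bullet> col Vh j = 1" using orthsetD(2)[OF ohs] by auto
  have sa: "\<And>i j. i \<le> j \<Longrightarrow> j < p \<Longrightarrow> lam (Suc j) \<le> lam (Suc i)" using ls by auto
  have sb: "\<And>i j. i \<le> j \<Longrightarrow> j < p \<Longrightarrow> lamh (Suc j) \<le> lamh (Suc i)" using lhs by auto
  have weyl': "\<And>k. k < p \<Longrightarrow> \<bar>lamh (Suc k) - lam (Suc k)\<bar> \<le> e"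
    unfolding e_def E_def by (rule weyl[OF S sS Sh sSh u eu uh euh sa sb])
  have hw: "(\<Sum>k<p. (lamh (Suc k) - lam (Suc k))\<^sup>2) \<le> F"
    unfolding F_def E_def by (rule hoffman_wielandt[OF S sS Sh sSh u eu uh euh sa sb])
  define D where "D = (\<Sum>j<d. (lamh (j + r) - lam (j + r))\<^sup>2)"
  have idx: "\<And>j. j < d \<Longrightarrow> j + r = Suc (j + (r - 1)) \<and> j + (r - 1) < p" using r by auto
  have D1: "D \<le> real d * e\<^sup>2"
  proof -
    have "D \<le> (\<Sum>j<d. e\<^sup>2)" unfolding D_def
    proof (intro sum_mono sq_le_of_abs_le)
      fix j assume "j \<in> {..<d}"
      then show "\<bar>lamh (j + r) - lam (j + r)\<bar> \<le> e" using idx[of j] weyl'[of "j + (r - 1)"] by auto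
    qed
    then show ?thesis by simp
  qed
  have D2: "D \<le> F"
  proof -
    let ?f = "\<lambda>k. (lamh (Suc k) - lam (Suc k))\<^sup>2"
    have sr: "\<And>j. Suc (j + (r - 1)) = j + r" using r by auto
    have "D = (\<Sum>j<d. ?f (j + (r - 1)))" unfolding D_def by (simp only: sr)
    also have "\<dots> = (\<Sum>k\<in>(\<lambda>j. j + (r - 1)) ` {..<d}. ?f k)"
      by (rule sum.reindex[symmetric, unfolded comp_def], auto simp: inj_on_def)
    also have "\<dots> \<le> (\<Sum>k<p. ?f k)" by (rule sum_mono2, insert idx, auto)
    finally show ?thesis using hw by simp
  qed
  define N where "N = (\<Sum>j<d. (E *\<^sub>v col Vh j) \<bullet> (E *\<^sub>v col Vh j))"
  have N1: "N \<le> real d * e\<^sup>2"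
  proof -
    have "N \<le> (\<Sum>j<d. e\<^sup>2)" unfolding N_def
    proof (intro sum_mono)
      fix j assume j: "j \<in> {..<d}"
      have "vnorm (E *\<^sub>v col Vh j) \<le> e * vnorm (col Vh j)" unfolding e_def
        by (rule op_norm_bound[OF E vhc], insert j, auto)
      moreover have "vnorm (col Vh j) = 1" using vh1[of j] j unfolding vnorm_def by auto
      ultimately have "vnorm (E *\<^sub>v col Vh j) \<le> e" by simp
      then have "(vnorm (E *\<^sub>v col Vh j))\<^sup>2 \<le> e\<^sup>2" by (intro sq_le_of_abs_le, simp add: vnorm_nonneg)
      then show "(E *\<^sub>v col Vh j) \<bullet> (E *\<^sub>v col Vh j) \<le> e\<^sup>2" using vnorm_sq by metis
    qed
    then show ?thesis by simp
  qed
  have N2: "N \<le> F" unfolding N_def F_def by (rule fsq_bessel[OF E ohs], insert dp, auto)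
  have ou: "orthset p {..<p - d} (\<lambda>t. u (oidx r d t))"
    using orthsetD[OF u] oidx_lt[OF r(2) r(1)] oidx_inj unfolding orthset_def by auto
  have perj: "\<And>j. j < d \<Longrightarrow> g\<^sup>2 * (\<Sum>t<p - d. (u (oidx r d t) \<bullet> col Vh j)\<^sup>2)
      \<le> 2 * ((E *\<^sub>v col Vh j) \<bullet> (E *\<^sub>v col Vh j)) + 2 * (lamh (j + r) - lam (j + r))\<^sup>2"
  proof -
    fix j assume j: "j < d"
    define vh where "vh = col Vh j"
    have vh: "vh \<in> carrier_vec p" unfolding vh_def using vhc[OF j] .
    have dvh: "dim_vec (col Vh j) = p" using Vh by auto
    define z where "z = Sg *\<^sub>v vh - lam (j + r) \<cdot>\<^sub>v vh"
    have z: "z \<in> carrier_vec p" unfolding z_def using S vh by auto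
    have uz: "\<And>t. t < p - d \<Longrightarrow> u (oidx r d t) \<bullet> z = (lam (oidx r d t + 1) - lam (j + r)) * (u (oidx r d t) \<bullet> vh)"
    proof -
      fix t assume t: "t < p - d"
      define k where "k = oidx r d t"
      have k: "k < p" unfolding k_def by (rule oidx_lt[OF r(2) r(1) t])
      have "u k \<bullet> z = u k \<bullet> (Sg *\<^sub>v vh) - u k \<bullet> (lam (j + r) \<cdot>\<^sub>v vh)"
        unfolding z_def using uc[OF k] S vh by (simp add: scalar_prod_minus_distrib[of _ p])
      also have "u k \<bullet> (Sg *\<^sub>v vh) = (Sg *\<^sub>v u k) \<bullet> vh" using sym_dot[OF S sS uc[OF k] vh] by simp
      also have "\<dots> = lam (Suc k) * (u k \<bullet> vh)" using eu[OF k] uc[OF k] vh by simp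
      also have "u k \<bullet> (lam (j + r) \<cdot>\<^sub>v vh) = lam (j + r) * (u k \<bullet> vh)" using uc[OF k] vh by simp
      finally show "u (oidx r d t) \<bullet> z = (lam (oidx r d t + 1) - lam (j + r)) * (u (oidx r d t) \<bullet> vh)"
        unfolding k_def[symmetric] by (simp add: algebra_simps)
    qed
    have "g\<^sup>2 * (\<Sum>t<p - d. (u (oidx r d t) \<bullet> vh)\<^sup>2) = (\<Sum>t<p - d. g\<^sup>2 * (u (oidx r d t) \<bullet> vh)\<^sup>2)"
      by (simp add: sum_distrib_left)
    also have "\<dots> \<le> (\<Sum>t<p - d. (u (oidx r d t) \<bullet> z)\<^sup>2)"
    proof (intro sum_mono)
      fix t assume t: "t \<in> {..<p - d}"
      have "g \<le> \<bar>lam (oidx r d t + 1) - lam (j + r)\<bar>" using sep[of t j] t j by auto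
      then have "g\<^sup>2 \<le> \<bar>lam (oidx r d t + 1) - lam (j + r)\<bar>\<^sup>2" using g by (intro power_mono, auto)
      then have "g\<^sup>2 \<le> (lam (oidx r d t + 1) - lam (j + r))\<^sup>2" by simp
      then show "g\<^sup>2 * (u (oidx r d t) \<bullet> vh)\<^sup>2 \<le> (u (oidx r d t) \<bullet> z)\<^sup>2"
        unfolding uz[of t, OF t[simplified]] power_mult_distrib by (intro mult_right_mono, auto)
    qed
    also have "\<dots> \<le> z \<bullet> z" by (rule bessel[OF ou _ z], auto)
    also have "\<dots> \<le> 2 * ((E *\<^sub>v vh) \<bullet> (E *\<^sub>v vh)) + 2 * (((lamh (j + r) - lam (j + r)) \<cdot>\<^sub>v vh) \<bullet> ((lamh (j + r) - lam (j + r)) \<cdot>\<^sub>v vh))"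
    proof (rule vec_sq_bound[OF z])
      show "E *\<^sub>v vh \<in> carrier_vec p" using E by auto
      show "(lamh (j + r) - lam (j + r)) \<cdot>\<^sub>v vh \<in> carrier_vec p" using vh by auto
      fix i assume i: "i < p"
      have Shv: "(Sgh *\<^sub>v vh) $ i = lamh (j + r) * vh $ i"
        using Vheig[OF j] i dvh unfolding vh_def by simp
      have "(E *\<^sub>v vh) $ i = (Sgh *\<^sub>v vh) $ i - (Sg *\<^sub>v vh) $ i"
        unfolding E_def using S Sh vh i by (simp add: minus_mult_distrib_mat_vec)
      then show "z $ i = ((lamh (j + r) - lam (j + r)) \<cdot>\<^sub>v vh) $ i - (E *\<^sub>v vh) $ i"
        unfolding z_def using Shv i vh S by (simp add: algebra_simps)
    qed
    also have "((lamh (j + r) - lam (j + r)) \<cdot>\<^sub>v vh) \<bullet> ((lamh (j + r) - lam (j + r)) \<cdot>\<^sub>v vh)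
       = (lamh (j + r) - lam (j + r))\<^sup>2" using vh vh1[OF j] unfolding vh_def by (simp add: power2_eq_square)
    finally show "g\<^sup>2 * (\<Sum>t<p - d. (u (oidx r d t) \<bullet> col Vh j)\<^sup>2)
      \<le> 2 * ((E *\<^sub>v col Vh j) \<bullet> (E *\<^sub>v col Vh j)) + 2 * (lamh (j + r) - lam (j + r))\<^sup>2"
      unfolding vh_def .
  qed
  have "g\<^sup>2 * (\<Sum>j<d. \<Sum>t<p - d. (u (oidx r d t) \<bullet> col Vh j)\<^sup>2)
      = (\<Sum>j<d. g\<^sup>2 * (\<Sum>t<p - d. (u (oidx r d t) \<bullet> col Vh j)\<^sup>2))" by (simp add: sum_distrib_left)
  also have "\<dots> \<le> (\<Sum>j<d. 2 * ((E *\<^sub>v col Vh j) \<bullet> (E *\<^sub>v col Vh j)) + 2 * (lamh (j + r) - lam (j + r))\<^sup>2)"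
    by (intro sum_mono perj, auto)
  also have "\<dots> = 2 * N + 2 * D" unfolding N_def D_def by (simp add: sum.distrib sum_distrib_left)
  also have "\<dots> \<le> 4 * m2" unfolding m2_def using N1 N2 D1 D2 by auto
  finally show ?thesis unfolding m2_def e_def F_def E_def .
qed

lemma procrustes_fsq:
  assumes V: "(V::real mat) \<in> carrier_mat p d" and on: "orthonormal_cols V"
    and Vh: "(Vh::real mat) \<in> carrier_mat p d" and onh: "orthonormal_cols Vh"
    and Oh: "Oh \<in> carrier_mat d d" and OO: "transpose_mat Oh * Oh = 1\<^sub>m d"
  shows "fsq (Vh * Oh - V) = 2 * real d - 2 * (\<Sum>a<d. \<Sum>b<d. Oh $$ (a,b) * (transpose_mat Vh * V) $$ (a,b))"
proof -
  define M where "M = transpose_mat Vh * V"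
  have X: "Vh * Oh - V \<in> carrier_mat p d" using Vh Oh V by auto
  have col1: "\<And>b. b < d \<Longrightarrow> col (Vh * Oh - V) b \<bullet> col (Vh * Oh - V) b = 2 - 2 * (\<Sum>a<d. Oh $$ (a,b) * M $$ (a,b))"
  proof -
    fix b assume b: "b < d"
    define y where "y = col Oh b"
    define v where "v = col V b"
    have y: "y \<in> carrier_vec d" unfolding y_def using Oh by auto
    have v: "v \<in> carrier_vec p" unfolding v_def using V b by auto
    define x where "x = Vh *\<^sub>v y"
    have x: "x \<in> carrier_vec p" unfolding x_def using Vh by auto
    have cx: "col (Vh * Oh - V) b = x - v"
      unfolding x_def y_def v_def using Vh Oh V b by auto
    have yy: "y \<bullet> y = 1"
    proof -
      have "(transpose_mat Oh * Oh) $$ (b,b) = col Oh b \<bullet> col Oh b" using Oh b by auto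
      then show ?thesis using OO b unfolding y_def by auto
    qed
    have xx: "x \<bullet> x = 1" unfolding x_def using isometry[OF Vh onh y] yy by simp
    have vv: "v \<bullet> v = 1" unfolding v_def using orthsetD(2)[OF orth_cols_set[OF V on], of b b] b by auto
    have xv: "x \<bullet> v = (\<Sum>a<d. Oh $$ (a,b) * M $$ (a,b))"
    proof -
      have "x \<bullet> v = v \<bullet> x" by (rule comm_scalar_prod[OF x v])
      also have "\<dots> = (transpose_mat Vh *\<^sub>v v) \<bullet> y" unfolding x_def
        by (rule transpose_vec_mult_scalar[OF Vh y v, symmetric])
      also have "\<dots> = (\<Sum>a<d. (transpose_mat Vh *\<^sub>v v) $ a * y $ a)" by (rule dot_sum[OF y])
      also have "\<dots> = (\<Sum>a<d. Oh $$ (a,b) * M $$ (a,b))"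
        unfolding M_def y_def v_def using Vh V Oh b by (intro sum.cong refl, auto)
      finally show ?thesis .
    qed
    have "(x - v) \<bullet> (x - v) = x \<bullet> x - 2 * (x \<bullet> v) + v \<bullet> v"
    proof -
      have "(x - v) \<bullet> (x - v) = x \<bullet> (x - v) - v \<bullet> (x - v)"
        by (rule minus_scalar_prod_distrib[OF x v], insert x v, auto)
      also have "\<dots> = (x \<bullet> x - x \<bullet> v) - (v \<bullet> x - v \<bullet> v)"
        using scalar_prod_minus_distrib[OF x x v] scalar_prod_minus_distrib[OF v x v] by simp
      also have "v \<bullet> x = x \<bullet> v" by (rule comm_scalar_prod[OF v x])
      finally show ?thesis by simp
    qed
    then show "col (Vh * Oh - V) b \<bullet> col (Vh * Oh - V) b = 2 - 2 * (\<Sum>a<d. Oh $$ (a,b) * M $$ (a,b))"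
      unfolding cx xx vv xv by simp
  qed
  have "fsq (Vh * Oh - V) = (\<Sum>b<d. 2 - 2 * (\<Sum>a<d. Oh $$ (a,b) * M $$ (a,b)))"
    unfolding fsq_cols[OF X] using col1 by simp
  also have "\<dots> = 2 * real d - 2 * (\<Sum>b<d. \<Sum>a<d. Oh $$ (a,b) * M $$ (a,b))"
    by (simp add: sum_subtractf sum_distrib_left)
  also have "(\<Sum>b<d. \<Sum>a<d. Oh $$ (a,b) * M $$ (a,b)) = (\<Sum>a<d. \<Sum>b<d. Oh $$ (a,b) * M $$ (a,b))"
    by (rule sum.swap)
  finally show ?thesis unfolding M_def .
qed

lemma two_powr: "(2::real) powr (3/2) = 2 * sqrt 2"
proof -
  have "(2::real) powr (3/2) = 2 powr (1 + 1/2)" by simp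
  also have "\<dots> = 2 powr 1 * 2 powr (1/2)" by (rule powr_add)
  also have "\<dots> = 2 * sqrt 2" by (simp add: powr_half_sqrt)
  finally show ?thesis .
qed

lemma min_sq: assumes "0 \<le> a" "0 \<le> (b::real)" shows "(min a b)\<^sup>2 = min (a\<^sup>2) (b\<^sup>2)"
proof (cases "a \<le> b")
  case True then have "a\<^sup>2 \<le> b\<^sup>2" using assms by (intro power_mono) auto
  then show ?thesis using True by (simp add: min_def)
next
  case False then have "b\<^sup>2 \<le> a\<^sup>2" using assms by (intro power_mono) auto
  then show ?thesis using False by (simp add: min_def)
qed

theorem theorem2:
  fixes Sigma Sigmah V Vh :: "real mat"
    and lam lamh :: "nat \<Rightarrow> real"
    and p r s :: nat
  defines "d \<equiv> s - r + 1"
  assumes Sigma_carr: "Sigma \<in> carrier_mat p p" and Sigmah_carr: "Sigmah \<in> carrier_mat p p"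
    and Sigma_sym: "transpose_mat Sigma = Sigma" and Sigmah_sym: "transpose_mat Sigmah = Sigmah"
    and lam_sorted: "\<And>i j. 1 \<le> i \<Longrightarrow> i \<le> j \<Longrightarrow> j \<le> p \<Longrightarrow> lam j \<le> lam i"
    and lamh_sorted: "\<And>i j. 1 \<le> i \<Longrightarrow> i \<le> j \<Longrightarrow> j \<le> p \<Longrightarrow> lamh j \<le> lamh i"
    and lam_eig: "char_poly Sigma = (\<Prod>i\<in>{1..p}. [:- lam i, 1:])"
    and lamh_eig: "char_poly Sigmah = (\<Prod>i\<in>{1..p}. [:- lamh i, 1:])"
    and rs: "1 \<le> r" "r \<le> s" "s \<le> p"
    and gap_pos: "eigengap lam p r s > 0"
    and V_carr: "V \<in> carrier_mat p d" and Vh_carr: "Vh \<in> carrier_mat p d"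
    and V_on: "orthonormal_cols V" and Vh_on: "orthonormal_cols Vh"
    and V_eig: "\<And>j. r \<le> j \<Longrightarrow> j \<le> s \<Longrightarrow> Sigma *\<^sub>v col V (j - r) = lam j \<cdot>\<^sub>v col V (j - r)"
    and Vh_eig: "\<And>j. r \<le> j \<Longrightarrow> j \<le> s \<Longrightarrow> Sigmah *\<^sub>v col Vh (j - r) = lamh j \<cdot>\<^sub>v col Vh (j - r)"
  shows "ereal (fro_norm (sin_theta Vh V))
           \<le> ereal (2 * min (sqrt (real d) * op_norm (Sigmah - Sigma)) (fro_norm (Sigmah - Sigma)))
              / eigengap lam p r s
         \<and> (\<exists>Oh \<in> carrier_mat d d. transpose_mat Oh * Oh = 1\<^sub>m d \<and>
           ereal (fro_norm (Vh * Oh - V))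
           \<le> ereal (2 powr (3/2) * min (sqrt (real d) * op_norm (Sigmah - Sigma)) (fro_norm (Sigmah - Sigma)))
              / eigengap lam p r s)"
proof -
  have sd: "s = r + d - 1" "0 < d" unfolding d_def using rs by auto
  have rd: "1 \<le> r" "r + d \<le> p + 1" using rs sd by auto
  have dp: "d \<le> p" using rd by auto
  have p0: "0 < p" using rs by auto
  have Veig: "\<And>j. j < d \<Longrightarrow> Sigma *\<^sub>v col V j = lam (j + r) \<cdot>\<^sub>v col V j"
    using V_eig[of "_ + r"] sd by auto
  have Vheig: "\<And>j. j < d \<Longrightarrow> Sigmah *\<^sub>v col Vh j = lamh (j + r) \<cdot>\<^sub>v col Vh j"
    using Vh_eig[of "_ + r"] sd by auto
  obtain u where u: "orthset p {..<p} u" "\<forall>k<p. Sigma *\<^sub>v u k = lam (Suc k) \<cdot>\<^sub>v u k"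
    using sorted_eigbasis[OF Sigma_carr Sigma_sym lam_eig] by blast
  obtain uh where uh: "orthset p {..<p} uh" "\<forall>k<p. Sigmah *\<^sub>v uh k = lamh (Suc k) \<cdot>\<^sub>v uh k"
    using sorted_eigbasis[OF Sigmah_carr Sigmah_sym lamh_eig] by blast
  define gp where "gp = eigengap lam p r s"
  obtain g where g: "0 < g" "r \<noteq> 1 \<longrightarrow> g \<le> lam (r - 1) - lam r" "s \<noteq> p \<longrightarrow> g \<le> lam s - lam (s + 1)"
    "\<not> (r = 1 \<and> s = p) \<longrightarrow> gp = ereal g"
  proof (cases "r = 1")
    case True
    show ?thesis
    proof (cases "s = p")
      case True
      show ?thesis by (rule that[of 1], insert \<open>r = 1\<close> True, auto)
    next
      case False
      have "gp = ereal (lam s - lam (s + 1))" unfolding gp_def eigengap_def using True False by simp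
      then show ?thesis using that[of "lam s - lam (s + 1)"] gap_pos True False unfolding gp_def by auto
    qed
  next
    case False
    show ?thesis
    proof (cases "s = p")
      case True
      have "gp = ereal (lam (r - 1) - lam r)" unfolding gp_def eigengap_def using True False by simp
      then show ?thesis using that[of "lam (r - 1) - lam r"] gap_pos True False unfolding gp_def by auto
    next
      case False
      have "gp = ereal (min (lam (r - 1) - lam r) (lam s - lam (s + 1)))"
        unfolding gp_def eigengap_def using \<open>r \<noteq> 1\<close> False by simp
      then show ?thesis using that[of "min (lam (r - 1) - lam r) (lam s - lam (s + 1))"]
        gap_pos \<open>r \<noteq> 1\<close> False unfolding gp_def by auto
    qed
  qed
  have sep: "\<And>t j. t < p - d \<Longrightarrow> j < d \<Longrightarrow> g \<le> \<bar>lam (oidx r d t + 1) - lam (j + r)\<bar>"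
  proof -
    fix t j assume tj: "t < p - d" "j < d"
    show "g \<le> \<bar>lam (oidx r d t + 1) - lam (j + r)\<bar>"
    proof (cases "t < r - 1")
      case True
      then have o: "oidx r d t + 1 = t + 1" unfolding oidx_def by auto
      have r1: "r \<noteq> 1" using True by auto
      have "lam (r - 1) \<le> lam (t + 1)" using lam_sorted[of "t + 1" "r - 1"] True rs by auto
      moreover have "lam (j + r) \<le> lam r" using lam_sorted[of r "j + r"] tj sd rs by auto
      ultimately show ?thesis using g(2) r1 o by auto
    next
      case False
      then have o: "oidx r d t + 1 = t + d + 1" unfolding oidx_def by auto
      have s1: "s \<noteq> p" using False tj sd rs by auto
      have "lam (t + d + 1) \<le> lam (s + 1)" using lam_sorted[of "s + 1" "t + d + 1"] False tj sd rs by auto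
      moreover have "lam s \<le> lam (j + r)" using lam_sorted[of "j + r" s] tj sd rs by auto
      ultimately show ?thesis using g(3) s1 o by auto
    qed
  qed
  define M where "M = transpose_mat Vh * V"
  have M: "M \<in> carrier_mat d d" unfolding M_def using V_carr Vh_carr by auto
  have contr: "\<And>x. x \<in> carrier_vec d \<Longrightarrow> (M *\<^sub>v x) \<bullet> (M *\<^sub>v x) \<le> x \<bullet> x"
    unfolding M_def by (rule contraction_M[OF V_carr V_on Vh_carr Vh_on _ dp])
  define SS where "SS = (\<Sum>j<d. \<Sum>t<p - d. (u (oidx r d t) \<bullet> col Vh j)\<^sup>2)"
  have SS0: "0 \<le> SS" unfolding SS_def by (auto intro!: sum_nonneg)
  have F1: "fsq (sin_theta Vh V) = real d - fsq M"
    unfolding M_def by (rule fsq_sin_theta[OF Vh_carr V_carr contr[unfolded M_def]])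
  have F2: "real d = fsq M + SS"
  proof -
    have sepne: "\<And>t j. t < p - d \<Longrightarrow> j < d \<Longrightarrow> lam (oidx r d t + 1) \<noteq> lam (j + r)"
      using sep g(1) by fastforce
    have per: "\<And>j. j < d \<Longrightarrow> 1 = (\<Sum>l<d. (col V l \<bullet> col Vh j)\<^sup>2) + (\<Sum>t<p - d. (u (oidx r d t) \<bullet> col Vh j)\<^sup>2)"
    proof -
      fix j assume j: "j < d"
      have "col Vh j \<bullet> col Vh j = 1" using orthsetD(2)[OF orth_cols_set[OF Vh_carr Vh_on], of j j] j by auto
      moreover have "col Vh j \<bullet> col Vh j = (\<Sum>l<d. (col V l \<bullet> col Vh j)\<^sup>2) + (\<Sum>t<p - d. (u (oidx r d t) \<bullet> col Vh j)\<^sup>2)"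
        by (rule mixed_parseval[OF Sigma_carr Sigma_sym V_carr V_on Veig u(1) _ rd sepne], insert u(2) Vh_carr j, auto)
      ultimately show "1 = (\<Sum>l<d. (col V l \<bullet> col Vh j)\<^sup>2) + (\<Sum>t<p - d. (u (oidx r d t) \<bullet> col Vh j)\<^sup>2)" by simp
    qed
    have fM: "fsq M = (\<Sum>j<d. \<Sum>l<d. (col V l \<bullet> col Vh j)\<^sup>2)"
    proof -
      have "fsq M = (\<Sum>j<d. \<Sum>l<d. (M $$ (j,l))\<^sup>2)" unfolding fsq_def using M by auto
      also have "\<dots> = (\<Sum>j<d. \<Sum>l<d. (col V l \<bullet> col Vh j)\<^sup>2)"
      proof (intro sum.cong refl)
        fix j l assume jl: "j \<in> {..<d}" "l \<in> {..<d}"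
        have "M $$ (j,l) = col Vh j \<bullet> col V l" unfolding M_def using jl V_carr Vh_carr by auto
        also have "\<dots> = col V l \<bullet> col Vh j" by (rule comm_scalar_prod[of _ p], insert V_carr Vh_carr jl, auto)
        finally show "(M $$ (j,l))\<^sup>2 = (col V l \<bullet> col Vh j)\<^sup>2" by simp
      qed
      finally show ?thesis .
    qed
    have "real d = (\<Sum>j<d. (1::real))" by simp
    also have "\<dots> = (\<Sum>j<d. (\<Sum>l<d. (col V l \<bullet> col Vh j)\<^sup>2) + (\<Sum>t<p - d. (u (oidx r d t) \<bullet> col Vh j)\<^sup>2))"
      using per by (intro sum.cong refl, auto)
    also have "\<dots> = fsq M + SS" unfolding fM SS_def by (simp add: sum.distrib)
    finally show ?thesis .
  qed
  define e where "e = op_norm (Sigmah - Sigma)"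
  define F where "F = fsq (Sigmah - Sigma)"
  define m where "m = min (sqrt (real d) * e) (sqrt F)"
  have e0: "0 \<le> e" unfolding e_def by (rule op_norm_nonneg[OF _ p0], insert Sigma_carr Sigmah_carr, auto)
  have F0: "0 \<le> F" unfolding F_def by (rule fsq_nonneg)
  have m0: "0 \<le> m" unfolding m_def using e0 F0 by auto
  have m2: "m\<^sup>2 = min (real d * e\<^sup>2) F"
    unfolding m_def using min_sq[of "sqrt (real d) * e" "sqrt F"] e0 F0 by (simp add: power_mult_distrib)
  have bound: "g\<^sup>2 * SS \<le> 4 * m\<^sup>2"
    unfolding m2 e_def F_def SS_def
    by (rule main_bound[OF Sigma_carr Sigma_sym Sigmah_carr Sigmah_sym V_carr V_on Vh_carr Vh_on Vheig u(1) _ uh(1) _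
          lam_sorted lamh_sorted rd sep g(1)], insert u(2) uh(2), auto)
  have sinSS: "fro_norm (sin_theta Vh V) = sqrt SS" unfolding fro_fsq F1 using F2 by simp
  have part1: "g * fro_norm (sin_theta Vh V) \<le> 2 * m"
  proof -
    have "(g * sqrt SS)\<^sup>2 \<le> (2 * m)\<^sup>2" using bound SS0 by (simp add: power_mult_distrib)
    then show ?thesis unfolding sinSS by (rule power2_le_imp_le, insert m0, auto)
  qed
  obtain Oh where Oh: "Oh \<in> carrier_mat d d" "transpose_mat Oh * Oh = 1\<^sub>m d"
    "fsq M \<le> (\<Sum>a<d. \<Sum>b<d. Oh $$ (a,b) * M $$ (a,b))"
    using polar_exists[OF M contr] by blast
  have fX: "fsq (Vh * Oh - V) \<le> 2 * SS"
    using procrustes_fsq[OF V_carr V_on Vh_carr Vh_on Oh(1,2)] Oh(3) F2 unfolding M_def by linarith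
  have X0: "0 \<le> fsq (Vh * Oh - V)" by (rule fsq_nonneg)
  have part2: "g * fro_norm (Vh * Oh - V) \<le> 2 powr (3/2) * m"
  proof -
    have "fro_norm (Vh * Oh - V) \<le> sqrt (2 * SS)" unfolding fro_fsq using fX by simp
    also have "\<dots> = sqrt 2 * sqrt SS" by (simp add: real_sqrt_mult)
    finally have "g * fro_norm (Vh * Oh - V) \<le> g * (sqrt 2 * sqrt SS)" using g(1) by simp
    also have "\<dots> = sqrt 2 * (g * fro_norm (sin_theta Vh V))" unfolding sinSS by simp
    also have "\<dots> \<le> sqrt 2 * (2 * m)" using part1 by simp
    finally show ?thesis unfolding two_powr by simp
  qed
  show ?thesis
  proof (cases "r = 1 \<and> s = p")
    case True
    then have pd: "p - d = 0" using sd by auto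
    then have "SS = 0" unfolding SS_def by simp
    then have s0: "fro_norm (sin_theta Vh V) = 0" using sinSS by simp
    have "fsq (Vh * Oh - V) = 0" using fX X0 \<open>SS = 0\<close> by simp
    then have x0: "fro_norm (Vh * Oh - V) = 0" unfolding fro_fsq by simp
    have gi: "eigengap lam p r s = \<infinity>" unfolding eigengap_def using True by simp
    show ?thesis unfolding gi using s0 x0 Oh(1,2) by auto
  next
    case False
    then have gg: "eigengap lam p r s = ereal g" using g(4) unfolding gp_def by simp
    have 1: "fro_norm (sin_theta Vh V) \<le> 2 * m / g" using part1 g(1) by (simp add: field_simps)
    have 2: "fro_norm (Vh * Oh - V) \<le> 2 powr (3/2) * m / g" using part2 g(1) by (simp add: field_simps)
    show ?thesis unfolding gg using 1 2 Oh(1,2) g(1) unfolding m_def e_def F_def fro_fsq by auto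
  qed
qed

end
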